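(* Let $\gamma\in(0,\infty)$, $\kappa>0$, $\rho_0=\frac1{1+\gamma}$, $\rho_\pm=\rho_0\pm\kappa n^{-1/3}$, and fix constants $M_1,M_2$. For any $-M_1\le v\le u\le M_2$: (a) if $Z^{\rho_+}(\gamma^2n-\beta_1M_1n^{2/3},n)\ge0$, then $$L^{\rm resc,h}_n(u)-L^{\rm resc,h}_n(v)\le B^{\rho_+}_n(u)-B^{\rho_+}_n(v)+(u^2-v^2)+2\beta_2\kappa(u-v)+O(n^{-1/3});$$ (b) if $Z^{\rho_-}(\gamma^2n+\beta_1M_2n^{2/3},n)\le0$, then $$L^{\rm resc,h}_n(u)-L^{\rm resc,h}_n(v)\ge B^{\rho_-}_n(u)-B^{\rho_-}_n(v)+(u^2-v^2)-2\beta_2\kappa(u-v)+O(n^{-1/3}).$$ Here $O(n^{-1/3})$ is uniform for $\kappa$ and $\gamma$ in bounded subsets of $(0,\infty)$.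
   Context: Coupled LPP models: for $\rho\in(0,1)$, let $\omega_{i,j}$, $i,j\ge0$, be independent with $\omega_{0,0}=0$, $\omega_{i,0}\sim{\rm Exp}(1-\rho)$ ($i\ge1$), $\omega_{0,j}\sim{\rm Exp}(\rho)$ ($j\ge1$), $\omega_{i,j}\sim{\rm Exp}(1)$ ($i,j\ge1$), where ${\rm Exp}(a)$ has mean $1/a$. $L^\rho(m,n)$ is the maximum over up-right paths $\pi=(\pi(0),\dots,\pi(\ell))$ (steps $(1,0)$ or $(0,1)$) from $(0,0)$ to $(m,n)$ of $\sum_{k=1}^\ell\omega_{\pi(k)}$, and $L(m,n)=L_{(0,0)\to(m,n)}$ is the same quantity computed with the same bulk weights but with $\omega_{i,0}=\omega_{0,j}=0$. The exit point of the maximizing path for $L^\rho(m,n)$ is its last point on the axes; $Z^\rho(m,n)=k$ if it is $(k,0)$, $k>0$, and $-k$ if it is $(0,k)$, $k>0$. Coordinates are understood with integer parts. Set $\beta_1=2(1+\gamma)^{2/3}\gamma^{4/3}$, $\beta_2=(1+\gamma)^{4/3}\gamma^{-1/3}$, $$L^{\rm resc,h}_n(u)=\frac{L(\gamma^2n+\beta_1un^{2/3},n)-\big((1+\gamma)^2n+2u(1+\gamma)^{5/3}\gamma^{1/3}n^{2/3}-\beta_2u^2n^{1/3}\big)}{\beta_2n^{1/3}},$$ $$B^{\rho_\pm}_n(u)=\frac{L^{\rho_\pm}(\gamma^2n+\beta_1un^{2/3},n)-\big(L^{\rho_\pm}(\gamma^2n,n)+\frac1{1-\rho_\pm}\beta_1un^{2/3}\big)}{\beta_2n^{1/3}}.$$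 *)

theory Defs
  imports "HOL-Probability.Probability"
begin

definition up_right_paths :: "nat \<times> nat \<Rightarrow> nat \<times> nat \<Rightarrow> (nat \<times> nat) list set" where
  "up_right_paths a b = {\<pi>. \<pi> \<noteq> [] \<and> hd \<pi> = a \<and> last \<pi> = b \<and>
     (\<forall>k. Suc k < length \<pi> \<longrightarrow>
        (\<pi> ! Suc k = (fst (\<pi> ! k) + 1, snd (\<pi> ! k)) \<or>
         \<pi> ! Suc k = (fst (\<pi> ! k), snd (\<pi> ! k) + 1)))}"

(* weight of a path: sum of w(pi(k)) for k = 1..l (the starting point is excluded) *)
definition path_weight :: "(nat \<times> nat \<Rightarrow> real) \<Rightarrow> (nat \<times> nat) list \<Rightarrow> real" where
  "path_weight w \<pi> = sum_list (map w (tl \<pi>))"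

definition lpp :: "(nat \<times> nat \<Rightarrow> real) \<Rightarrow> nat \<times> nat \<Rightarrow> nat \<times> nat \<Rightarrow> real" where
  "lpp w a b = Max (path_weight w ` up_right_paths a b)"

(* L^rho(m,n): LPP from (0,0) with the weights w (including boundary weights) *)
definition Lrho :: "(nat \<times> nat \<Rightarrow> real) \<Rightarrow> nat \<Rightarrow> nat \<Rightarrow> real" where
  "Lrho w m n = lpp w (0,0) (m,n)"

definition Lbulk :: "(nat \<times> nat \<Rightarrow> real) \<Rightarrow> nat \<Rightarrow> nat \<Rightarrow> real" where
  "Lbulk w m n = lpp (\<lambda>p. if fst p = 0 \<or> snd p = 0 then 0 else w p) (0,0) (m,n)"

(* the (a.s. unique) maximizing path for L^rho(m,n) *)
definition geodesic :: "(nat \<times> nat \<Rightarrow> real) \<Rightarrow> nat \<Rightarrow> nat \<Rightarrow> (nat \<times> nat) list" where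
  "geodesic w m n = (THE \<pi>. \<pi> \<in> up_right_paths (0,0) (m,n) \<and> path_weight w \<pi> = Lrho w m n)"

definition exit_point :: "(nat \<times> nat \<Rightarrow> real) \<Rightarrow> nat \<Rightarrow> nat \<Rightarrow> nat \<times> nat" where
  "exit_point w m n = last (filter (\<lambda>p. fst p = 0 \<or> snd p = 0) (geodesic w m n))"

definition Zexit :: "(nat \<times> nat \<Rightarrow> real) \<Rightarrow> nat \<Rightarrow> nat \<Rightarrow> int" where
  "Zexit w m n = (let e = exit_point w m n in
      if snd e = 0 then int (fst e) else - int (snd e))"

definition coord :: "real \<Rightarrow> nat" where
  "coord x = nat \<lfloor>x\<rfloor>"

definition beta1 :: "real \<Rightarrow> real" where
  "beta1 \<gamma> = 2 * (1 + \<gamma>) powr (2/3) * \<gamma> powr (4/3)"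

definition beta2 :: "real \<Rightarrow> real" where
  "beta2 \<gamma> = (1 + \<gamma>) powr (4/3) * \<gamma> powr (-1/3)"

definition Lresc_h :: "(nat \<times> nat \<Rightarrow> real) \<Rightarrow> real \<Rightarrow> nat \<Rightarrow> real \<Rightarrow> real" where
  "Lresc_h w \<gamma> n u =
     (Lbulk w (coord (\<gamma>\<^sup>2 * real n + beta1 \<gamma> * u * real n powr (2/3))) n
      - ((1 + \<gamma>)\<^sup>2 * real n + 2 * u * (1 + \<gamma>) powr (5/3) * \<gamma> powr (1/3) * real n powr (2/3)
         - beta2 \<gamma> * u\<^sup>2 * real n powr (1/3)))
     / (beta2 \<gamma> * real n powr (1/3))"

definition Bfun :: "(nat \<times> nat \<Rightarrow> real) \<Rightarrow> real \<Rightarrow> real \<Rightarrow> nat \<Rightarrow> real \<Rightarrow> real" where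
  "Bfun w \<rho> \<gamma> n u =
     (Lrho w (coord (\<gamma>\<^sup>2 * real n + beta1 \<gamma> * u * real n powr (2/3))) n
      - (Lrho w (coord (\<gamma>\<^sup>2 * real n)) n + 1 / (1 - \<rho>) * beta1 \<gamma> * u * real n powr (2/3)))
     / (beta2 \<gamma> * real n powr (1/3))"

end

theory Submission
  imports Defs
begin

abbreviation "P m n \<equiv> up_right_paths (0,0) (m,n)"

lemma path_step:
  assumes "\<pi> \<in> up_right_paths a b" "Suc k < length \<pi>"
  shows "\<pi> ! Suc k = (fst (\<pi> ! k) + 1, snd (\<pi> ! k)) \<or> \<pi> ! Suc k = (fst (\<pi> ! k), snd (\<pi> ! k) + 1)"
  using assms unfolding up_right_paths_def by blast

lemma path_0: "\<pi> \<in> up_right_paths a b \<Longrightarrow> \<pi> ! 0 = a"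
  unfolding up_right_paths_def by (auto simp: hd_conv_nth)

lemma path_ne: "\<pi> \<in> up_right_paths a b \<Longrightarrow> \<pi> \<noteq> []"
  unfolding up_right_paths_def by auto

lemma path_last: "\<pi> \<in> up_right_paths a b \<Longrightarrow> \<pi> ! (length \<pi> - 1) = b"
  unfolding up_right_paths_def by (auto simp: last_conv_nth)

lemma path_sum:
  assumes "\<pi> \<in> P m n" "i < length \<pi>"
  shows "fst (\<pi>!i) + snd (\<pi>!i) = i"
  using assms(2)
proof (induction i)
  case 0 then show ?case using path_0[OF assms(1)] by simp
next
  case (Suc i)
  then show ?case using path_step[OF assms(1) Suc(2)] by auto
qed

lemma path_len:
  assumes "\<pi> \<in> P m n" shows "length \<pi> = m + n + 1"
proof -
  have "length \<pi> > 0" using path_ne[OF assms] by simp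
  then have "fst (\<pi>!(length \<pi> - 1)) + snd (\<pi>!(length \<pi> - 1)) = length \<pi> - 1"
    using path_sum[OF assms] by simp
  then show ?thesis using path_last[OF assms] \<open>length \<pi> > 0\<close> by simp
qed

lemma path_mono:
  assumes "\<pi> \<in> up_right_paths a b" "i \<le> j" "j < length \<pi>"
  shows "fst (\<pi>!i) \<le> fst (\<pi>!j) \<and> snd (\<pi>!i) \<le> snd (\<pi>!j)"
  using assms(2,3)
proof (induction j)
  case 0 then show ?case by simp
next
  case (Suc j)
  show ?case
  proof (cases "i = Suc j")
    case True then show ?thesis by simp
  next
    case False
    then have "fst (\<pi>!i) \<le> fst (\<pi>!j) \<and> snd (\<pi>!i) \<le> snd (\<pi>!j)" using Suc by auto
    then show ?thesis using path_step[OF assms(1) Suc(3)] by auto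
  qed
qed

lemma path_bounds:
  assumes "\<pi> \<in> P m n" "i < length \<pi>"
  shows "fst (\<pi>!i) \<le> m \<and> snd (\<pi>!i) \<le> n"
  using path_mono[OF assms(1), of i "length \<pi> - 1"] path_last[OF assms(1)] assms(2) by auto

lemma path_fst_step:
  assumes "\<pi> \<in> up_right_paths a b" "Suc k < length \<pi>"
  shows "fst (\<pi> ! Suc k) = fst (\<pi> ! k) \<or> fst (\<pi> ! Suc k) = fst (\<pi> ! k) + 1"
  using path_step[OF assms] by auto

lemma finite_P: "finite (P m n)"
proof -
  have "P m n \<subseteq> {xs. set xs \<subseteq> {..m} \<times> {..n} \<and> length xs = m + n + 1}"
  proof
    fix \<pi> assume a: "\<pi> \<in> P m n"
    have "set \<pi> \<subseteq> {..m} \<times> {..n}"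
    proof
      fix x assume "x \<in> set \<pi>"
      then obtain i where "i < length \<pi>" "x = \<pi>!i" by (auto simp: in_set_conv_nth)
      then show "x \<in> {..m} \<times> {..n}" using path_bounds[OF a] by (cases x) force
    qed
    then show "\<pi> \<in> {xs. set xs \<subseteq> {..m} \<times> {..n} \<and> length xs = m + n + 1}"
      using path_len[OF a] by simp
  qed
  moreover have "finite {xs. set xs \<subseteq> {..m} \<times> {..n} \<and> length xs = m + n + 1}"
    by (rule finite_lists_length_eq) simp
  ultimately show ?thesis by (rule finite_subset)
qed

definition std_path :: "nat \<Rightarrow> nat \<Rightarrow> (nat \<times> nat) list" where
  "std_path m n = map (\<lambda>i. if i \<le> m then (i,0) else (m, i - m)) [0..<m+n+1]"

lemma std_path: "std_path m n \<in> P m n"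
proof -
  let ?f = "\<lambda>i::nat. if i \<le> m then (i,0::nat) else (m, i - m)"
  have L: "length (std_path m n) = m + n + 1" by (simp add: std_path_def)
  have N: "\<And>i. i < m + n + 1 \<Longrightarrow> std_path m n ! i = ?f i"
    unfolding std_path_def by (simp del: upt_Suc)
  show ?thesis unfolding up_right_paths_def
  proof (intro CollectI conjI allI impI)
    show "std_path m n \<noteq> []" using L by auto
    show "hd (std_path m n) = (0,0)" using N[of 0] L by (subst hd_conv_nth) auto
    show "last (std_path m n) = (m,n)" using N[of "m+n"] L by (subst last_conv_nth) auto
    fix k assume "Suc k < length (std_path m n)"
    then show "std_path m n ! Suc k = (fst (std_path m n ! k) + 1, snd (std_path m n ! k)) \<or>
         std_path m n ! Suc k = (fst (std_path m n ! k), snd (std_path m n ! k) + 1)"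
    proof (cases "Suc k \<le> m")
      case True then show ?thesis using N[of k] N[of "Suc k"] L \<open>Suc k < _\<close> by simp
    next
      case False
      then have "k \<ge> m" by simp
      then have "Suc k - m = Suc (k - m)" by (simp add: Suc_diff_le)
      then show ?thesis using N[of k] N[of "Suc k"] L \<open>Suc k < _\<close> False \<open>k \<ge> m\<close> by auto
    qed
  qed
qed

lemma P_ne: "P m n \<noteq> {}" using std_path by blast

lemma path_weight_sum:
  assumes "\<pi> \<in> up_right_paths a b"
  shows "path_weight w \<pi> = (\<Sum>j\<in>{0<..<length \<pi>}. w (\<pi>!j))"
proof -
  have "path_weight w \<pi> = (\<Sum>j<length (tl \<pi>). w (tl \<pi> ! j))"
    unfolding path_weight_def by (simp add: sum_list_sum_nth atLeast0LessThan)
  also have "\<dots> = (\<Sum>j<length \<pi> - 1. w (\<pi> ! Suc j))"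
    by (simp add: nth_tl)
  also have "\<dots> = (\<Sum>j\<in>{Suc 0..<Suc (length \<pi> - 1)}. w (\<pi>!j))"
    by (simp only: sum.shift_bounds_Suc_ivl lessThan_atLeast0 o_def)
  also have "{Suc 0..<Suc (length \<pi> - 1)} = {0<..<length \<pi>}"
    using path_ne[OF assms] by auto
  finally show ?thesis .
qed

definition spl :: "(nat \<times> nat) list \<Rightarrow> nat \<Rightarrow> (nat \<times> nat) list \<Rightarrow> (nat \<times> nat) list" where
  "spl \<pi> i \<sigma> = map (\<lambda>j. if j \<le> i then \<pi>!j else \<sigma>!j) [0..<length \<sigma>]"

lemma spl_len[simp]: "length (spl \<pi> i \<sigma>) = length \<sigma>"
  by (simp add: spl_def)

lemma spl_nth: "j < length \<sigma> \<Longrightarrow> spl \<pi> i \<sigma> ! j = (if j \<le> i then \<pi>!j else \<sigma>!j)"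
  by (simp add: spl_def)

lemma spl_path:
  assumes \<pi>: "\<pi> \<in> P m n" and \<sigma>: "\<sigma> \<in> P m' n'" and i: "i < length \<pi>" "i < length \<sigma>"
    and eq: "\<pi>!i = \<sigma>!i"
  shows "spl \<pi> i \<sigma> \<in> P m' n'"
proof -
  let ?s = "spl \<pi> i \<sigma>"
  have ne: "\<sigma> \<noteq> []" using path_ne[OF \<sigma>] .
  show ?thesis unfolding up_right_paths_def
  proof (intro CollectI conjI allI impI)
    show sne: "?s \<noteq> []" using ne by (metis spl_len length_0_conv)
    have "?s ! 0 = (0,0)" using ne path_0[OF \<pi>] by (simp add: spl_nth)
    then show "hd ?s = (0,0)" using sne by (simp add: hd_conv_nth)
    show "last ?s = (m',n')"
    proof -
      have "last ?s = ?s ! (length \<sigma> - 1)" using sne by (simp add: last_conv_nth)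
      also have "\<dots> = \<sigma> ! (length \<sigma> - 1)" 
      proof (cases "length \<sigma> - 1 \<le> i")
        case True then have "length \<sigma> - 1 = i" using i by linarith
        then show ?thesis using eq i spl_nth[of i \<sigma> \<pi> i] by simp
      qed (use ne in \<open>simp add: spl_nth\<close>)
      finally show ?thesis using path_last[OF \<sigma>] by simp
    qed
    fix k assume k: "Suc k < length ?s"
    show "?s ! Suc k = (fst (?s ! k) + 1, snd (?s ! k)) \<or> ?s ! Suc k = (fst (?s ! k), snd (?s ! k) + 1)"
    proof (cases "Suc k \<le> i")
      case True then show ?thesis using k i path_step[OF \<pi>, of k] by (simp add: spl_nth)
    next
      case False
      then have "k \<ge> i" by simp
      then show ?thesis using k eq path_step[OF \<sigma>, of k] False
        by (cases "k = i") (auto simp: spl_nth)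
    qed
  qed
qed

lemma weight_split:
  assumes "\<pi> \<in> up_right_paths a b" "i < length \<pi>"
  shows "path_weight w \<pi> = (\<Sum>j\<in>{0<..i}. w (\<pi>!j)) + (\<Sum>j\<in>{i<..<length \<pi>}. w (\<pi>!j))"
proof -
  have "{0<..<length \<pi>} = {0<..i} \<union> {i<..<length \<pi>}" using assms(2) by auto
  then show ?thesis using path_weight_sum[OF assms(1)]
    by (simp add: sum.union_disjoint ivl_disj_int)
qed

lemma weight_spl:
  assumes \<pi>: "\<pi> \<in> P m n" and \<sigma>: "\<sigma> \<in> P m' n'" and i: "i < length \<pi>" "i < length \<sigma>"
    and eq: "\<pi>!i = \<sigma>!i"
  shows "path_weight w (spl \<pi> i \<sigma>) = (\<Sum>j\<in>{0<..i}. w (\<pi>!j)) + (\<Sum>j\<in>{i<..<length \<sigma>}. w (\<sigma>!j))"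
proof -
  have sp: "spl \<pi> i \<sigma> \<in> P m' n'" by (rule spl_path[OF assms])
  show ?thesis using weight_split[OF sp, of i w] i
    by (auto simp: spl_nth intro!: sum.cong arg_cong2[where f="(+)"])
qed

lemma discrete_ivt:
  fixes d :: "nat \<Rightarrow> int"
  assumes "\<And>k. i0 \<le> k \<Longrightarrow> k < i1 \<Longrightarrow> \<bar>d (Suc k) - d k\<bar> \<le> 1"
    and "i0 \<le> i1" "d i0 \<ge> 0" "d i1 \<le> 0"
  shows "\<exists>i. i0 \<le> i \<and> i \<le> i1 \<and> d i = 0"
  using assms
proof (induction i1)
  case 0 then show ?case by auto
next
  case (Suc i1)
  show ?case
  proof (cases "i0 = Suc i1")
    case True then show ?thesis using Suc by auto
  next
    case False
    then have le: "i0 \<le> i1" using Suc by simp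
    show ?thesis
    proof (cases "d i1 \<le> 0")
      case True
      then obtain i where "i0 \<le> i \<and> i \<le> i1 \<and> d i = 0" using Suc.IH[OF _ le Suc(4) True] Suc(2) by force
      then show ?thesis by (intro exI[of _ i]) auto
    next
      case False
      then have "d (Suc i1) = 0" using Suc(2)[of i1] le Suc(5) by force
      then show ?thesis by (intro exI[of _ "Suc i1"]) (auto simp: Suc(3))
    qed
  qed
qed

lemma crossing:
  assumes \<pi>: "\<pi> \<in> P m n" and \<sigma>: "\<sigma> \<in> P m' n'" and "i0 \<le> i1" "i1 < length \<pi>" "i1 < length \<sigma>"
    and "fst (\<pi>!i0) \<ge> fst (\<sigma>!i0)" "fst (\<pi>!i1) \<le> fst (\<sigma>!i1)"
  shows "\<exists>i. i0 \<le> i \<and> i \<le> i1 \<and> \<pi>!i = \<sigma>!i"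
proof -
  define d where "d k = int (fst (\<pi>!k)) - int (fst (\<sigma>!k))" for k
  have "\<exists>i. i0 \<le> i \<and> i \<le> i1 \<and> d i = 0"
  proof (rule discrete_ivt)
    fix k assume "i0 \<le> k" "k < i1"
    then have "Suc k < length \<pi>" "Suc k < length \<sigma>" using assms by auto
    then show "\<bar>d (Suc k) - d k\<bar> \<le> 1"
      using path_fst_step[OF \<pi>, of k] path_fst_step[OF \<sigma>, of k] unfolding d_def by auto
  qed (use assms in \<open>auto simp: d_def\<close>)
  then obtain i where i: "i0 \<le> i" "i \<le> i1" "d i = 0" by auto
  have "fst (\<pi>!i) + snd (\<pi>!i) = i" "fst (\<sigma>!i) + snd (\<sigma>!i) = i"
    using path_sum[OF \<pi>, of i] path_sum[OF \<sigma>, of i] i assms by auto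
  then have "\<pi>!i = \<sigma>!i" using i(3) unfolding d_def by (simp add: prod_eq_iff)
  then show ?thesis using i by auto
qed

lemma lpp_ge: "\<pi> \<in> P m n \<Longrightarrow> path_weight w \<pi> \<le> lpp w (0,0) (m,n)"
  unfolding lpp_def using finite_P by (intro Max_ge) auto

lemma lpp_attained: "\<exists>\<pi>\<in>P m n. path_weight w \<pi> = lpp w (0,0) (m,n)"
proof -
  have "lpp w (0,0) (m,n) \<in> path_weight w ` P m n"
    unfolding lpp_def using finite_P P_ne by (intro Max_in) auto
  then show ?thesis by auto
qed

definition notie :: "(nat \<times> nat \<Rightarrow> real) \<Rightarrow> bool" where
  "notie w \<longleftrightarrow> (\<forall>m n. \<forall>\<pi>1\<in>P m n. \<forall>\<pi>2\<in>P m n. path_weight w \<pi>1 = path_weight w \<pi>2 \<longrightarrow> \<pi>1 = \<pi>2)"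

lemma geodesic:
  assumes "notie w"
  shows "geodesic w m n \<in> P m n \<and> path_weight w (geodesic w m n) = Lrho w m n"
proof -
  obtain \<pi>0 where p0: "\<pi>0 \<in> P m n" "path_weight w \<pi>0 = Lrho w m n"
    using lpp_attained[of m n w] unfolding Lrho_def by auto
  have uq: "\<pi> = \<pi>0" if "\<pi> \<in> P m n \<and> path_weight w \<pi> = Lrho w m n" for \<pi>
  proof -
    have "\<pi> \<in> P m n" "path_weight w \<pi> = path_weight w \<pi>0" using p0 that by auto
    then show ?thesis using assms p0(1) unfolding notie_def by blast
  qed
  have "geodesic w m n = \<pi>0" unfolding geodesic_def
    by (rule the_equality) (use p0 uq in blast)+
  then show ?thesis using p0 by simp
qed

lemma geodesic_unique:
  assumes "notie w" "\<pi> \<in> P m n" "path_weight w \<pi> = Lrho w m n"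
  shows "\<pi> = geodesic w m n"
  using assms geodesic[OF assms(1), of m n] unfolding notie_def by simp

abbreviation ax :: "nat \<times> nat \<Rightarrow> bool" where "ax p \<equiv> fst p = 0 \<or> snd p = 0"

lemma last_filter_idx:
  assumes "j < length xs" "Q (xs!j)" "\<forall>l. j < l \<and> l < length xs \<longrightarrow> \<not> Q (xs!l)"
  shows "last (filter Q xs) = xs!j"
proof -
  have xs: "xs = take j xs @ xs!j # drop (Suc j) xs" using assms(1) by (simp add: id_take_nth_drop)
  have "filter Q (drop (Suc j) xs) = []"
    unfolding filter_empty_conv
  proof
    fix x assume "x \<in> set (drop (Suc j) xs)"
    then obtain l where "l < length (drop (Suc j) xs)" "x = drop (Suc j) xs ! l" by (auto simp: in_set_conv_nth)
    then show "\<not> Q x" using assms(3)[rule_format, of "Suc j + l"] by auto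
  qed
  then have "filter Q xs = filter Q (take j xs) @ [xs!j]"
    using assms(2) by (subst xs) simp
  then show ?thesis by simp
qed

lemma exit_struct:
  assumes g: "g \<in> P m n" and mn: "1 \<le> m + n"
  defines "e \<equiv> last (filter ax g)"
  shows "(snd e = 0 \<and> fst e \<ge> 1 \<and> g!1 = (1,0) \<and> (\<exists>k. k < length g \<and> g!k = (k,0) \<and> (\<forall>l. k<l \<and> l<length g \<longrightarrow> \<not> ax (g!l))))
       \<or> (snd e \<noteq> 0 \<and> fst e = 0 \<and> g!1 = (0,1) \<and> (\<exists>k. k < length g \<and> g!k = (0,k) \<and> (\<forall>l. k<l \<and> l<length g \<longrightarrow> \<not> ax (g!l))))"
proof -
  define S where "S = {j. j < length g \<and> ax (g!j)}"
  have L: "length g = m + n + 1" using path_len[OF g] .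
  have "1 < length g" using L mn by linarith
  then have "fst (g!1) + snd (g!1) = 1" using path_sum[OF g] by blast
  then have "ax (g!1)" by presburger
  then have 1: "1 \<in> S" using L mn unfolding S_def by auto
  have fS: "finite S" unfolding S_def by auto
  define k where "k = Max S"
  have kS: "k \<in> S" unfolding k_def using fS 1 by (intro Max_in) auto
  have k1: "1 \<le> k" unfolding k_def using fS 1 by (intro Max_ge) auto
  have kmax: "\<forall>l. k<l \<and> l<length g \<longrightarrow> \<not> ax (g!l)"
  proof (intro allI impI)
    fix l assume "k < l \<and> l < length g"
    then have "l \<notin> S" using Max_ge[OF fS, of l] unfolding k_def by auto
    then show "\<not> ax (g!l)" using \<open>k < l \<and> l < length g\<close> unfolding S_def by blast
  qed
  have klt: "k < length g" "ax (g!k)" using kS unfolding S_def by auto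
  have ee: "e = g!k" unfolding e_def by (rule last_filter_idx[OF klt kmax])
  have sk: "fst (g!k) + snd (g!k) = k" using path_sum[OF g klt(1)] .
  have s1: "fst (g!1) + snd (g!1) = 1" using path_sum[OF g] \<open>1 < length g\<close> by blast
  have mo: "fst (g!1) \<le> fst (g!k) \<and> snd (g!1) \<le> snd (g!k)" using path_mono[OF g k1 klt(1)] .
  show ?thesis
  proof (cases "snd (g!k) = 0")
    case True
    then have "g!k = (k,0)" using sk by (simp add: prod_eq_iff)
    moreover have "g!1 = (1,0)" using mo True s1 by (simp add: prod_eq_iff)
    ultimately show ?thesis using klt kmax ee True k1 by auto
  next
    case False
    then have f0: "fst (g!k) = 0" using klt(2) by simp
    then have "g!k = (0,k)" using sk by (simp add: prod_eq_iff)
    moreover have "g!1 = (0,1)" using mo f0 s1 by (simp add: prod_eq_iff)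
    ultimately show ?thesis using klt kmax ee False f0 by auto
  qed
qed

lemma mono_contra:
  assumes nt: "notie w"
    and \<pi>: "\<pi> \<in> P m n" "path_weight w \<pi> = Lrho w m n"
    and \<tau>: "\<tau> \<in> P m' n" "path_weight w \<tau> = Lrho w m' n"
    and mm: "m \<le> m'" "1 \<le> m + n" and s1: "\<pi>!1 = (1,0)" "\<tau>!1 = (0,1)"
  shows False
proof -
  have Lp: "length \<pi> = m + n + 1" using path_len[OF \<pi>(1)] .
  have Lt: "length \<tau> = m' + n + 1" using path_len[OF \<tau>(1)] .
  have e1: "fst (\<pi>!(m+n)) = m" using path_last[OF \<pi>(1)] Lp by simp
  have e2: "fst (\<tau>!(m+n)) \<ge> m" using path_sum[OF \<tau>(1), of "m+n"] path_bounds[OF \<tau>(1), of "m+n"] Lt mm by auto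
  obtain i where i: "1 \<le> i" "i \<le> m+n" "\<pi>!i = \<tau>!i"
    using crossing[OF \<pi>(1) \<tau>(1), of 1 "m+n"] mm Lp Lt e1 e2 s1 by auto
  have il: "i < length \<pi>" "i < length \<tau>" using i Lp Lt mm by auto
  have A: "spl \<pi> i \<tau> \<in> P m' n" by (rule spl_path[OF \<pi>(1) \<tau>(1) il i(3)])
  have B: "spl \<tau> i \<pi> \<in> P m n" by (rule spl_path[OF \<tau>(1) \<pi>(1) il(2,1) i(3)[symmetric]])
  have wA: "path_weight w (spl \<pi> i \<tau>) = (\<Sum>j\<in>{0<..i}. w (\<pi>!j)) + (\<Sum>j\<in>{i<..<length \<tau>}. w (\<tau>!j))"
    by (rule weight_spl[OF \<pi>(1) \<tau>(1) il i(3)])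
  have wB: "path_weight w (spl \<tau> i \<pi>) = (\<Sum>j\<in>{0<..i}. w (\<tau>!j)) + (\<Sum>j\<in>{i<..<length \<pi>}. w (\<pi>!j))"
    by (rule weight_spl[OF \<tau>(1) \<pi>(1) il(2,1) i(3)[symmetric]])
  have wp: "path_weight w \<pi> = (\<Sum>j\<in>{0<..i}. w (\<pi>!j)) + (\<Sum>j\<in>{i<..<length \<pi>}. w (\<pi>!j))"
    by (rule weight_split[OF \<pi>(1) il(1)])
  have wt: "path_weight w \<tau> = (\<Sum>j\<in>{0<..i}. w (\<tau>!j)) + (\<Sum>j\<in>{i<..<length \<tau>}. w (\<tau>!j))"
    by (rule weight_split[OF \<tau>(1) il(2)])
  have "path_weight w (spl \<pi> i \<tau>) \<le> Lrho w m' n" using lpp_ge[OF A] unfolding Lrho_def by simp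
  moreover have "path_weight w (spl \<tau> i \<pi>) \<le> Lrho w m n" using lpp_ge[OF B] unfolding Lrho_def by simp
  ultimately have "path_weight w (spl \<pi> i \<tau>) = Lrho w m' n" using wA wB wp wt \<pi>(2) \<tau>(2) by linarith
  then have "spl \<pi> i \<tau> = \<tau>"
    using geodesic_unique[OF nt A] geodesic_unique[OF nt \<tau>(1,2)] by simp
  moreover have "spl \<pi> i \<tau> ! 1 = \<pi>!1" using i il by (simp add: spl_nth)
  ultimately show False using s1 by simp
qed

lemma compA:
  assumes bulk: "\<forall>p. \<not> ax p \<longrightarrow> wr p = w0 p" and nonneg: "\<forall>p. ax p \<longrightarrow> wr p \<ge> 0"
    and \<pi>: "\<pi> \<in> P mv n" "path_weight wr \<pi> = Lrho wr mv n"
    and k: "k < length \<pi>" "\<pi>!k = (k,0)" "\<forall>l. k<l \<and> l<length \<pi> \<longrightarrow> \<not> ax (\<pi>!l)"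
    and mm: "mv \<le> mu"
  shows "Lbulk w0 mu n - Lbulk w0 mv n \<le> Lrho wr mu n - Lrho wr mv n"
proof -
  define wB where "wB = (\<lambda>p. if fst p = 0 \<or> snd p = 0 then 0 else w0 p)"
  have LB: "Lbulk w0 m n = lpp wB (0,0) (m,n)" for m unfolding Lbulk_def wB_def ..
  have le: "wB p \<le> wr p" for p using bulk[rule_format, of p] nonneg[rule_format, of p] unfolding wB_def by (cases "ax p") auto
  obtain \<sigma> where \<sigma>: "\<sigma> \<in> P mu n" "path_weight wB \<sigma> = lpp wB (0,0) (mu,n)"
    using lpp_attained by blast
  have Lp: "length \<pi> = mv + n + 1" using path_len[OF \<pi>(1)] .
  have Ls: "length \<sigma> = mu + n + 1" using path_len[OF \<sigma>(1)] .
  have c0: "fst (\<sigma>!k) \<le> fst (\<pi>!k)" using path_sum[OF \<sigma>(1), of k] k Lp Ls mm by auto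
  have e1: "fst (\<pi>!(mv+n)) = mv" using path_last[OF \<pi>(1)] Lp by simp
  have e2: "fst (\<sigma>!(mv+n)) \<ge> mv" using path_sum[OF \<sigma>(1), of "mv+n"] path_bounds[OF \<sigma>(1), of "mv+n"] Ls mm by auto
  obtain i where i: "k \<le> i" "i \<le> mv+n" "\<pi>!i = \<sigma>!i"
    using crossing[OF \<pi>(1) \<sigma>(1), of k "mv+n"] mm Lp Ls e1 e2 c0 k by auto
  have il: "i < length \<pi>" "i < length \<sigma>" using i Lp Ls mm by auto
  have A: "spl \<pi> i \<sigma> \<in> P mu n" by (rule spl_path[OF \<pi>(1) \<sigma>(1) il i(3)])
  have B: "spl \<sigma> i \<pi> \<in> P mv n" by (rule spl_path[OF \<sigma>(1) \<pi>(1) il(2,1) i(3)[symmetric]])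
  define Tp where "Tp (w::nat\<times>nat\<Rightarrow>real) = (\<Sum>j\<in>{i<..<length \<pi>}. w (\<pi>!j))" for w
  define Ts where "Ts (w::nat\<times>nat\<Rightarrow>real) = (\<Sum>j\<in>{i<..<length \<sigma>}. w (\<sigma>!j))" for w
  define Sp where "Sp (w::nat\<times>nat\<Rightarrow>real) = (\<Sum>j\<in>{0<..i}. w (\<pi>!j))" for w
  define Ss where "Ss (w::nat\<times>nat\<Rightarrow>real) = (\<Sum>j\<in>{0<..i}. w (\<sigma>!j))" for w
  have 1: "Lrho wr mu n \<ge> Sp wr + Ts wr"
    using lpp_ge[OF A, of wr] weight_spl[OF \<pi>(1) \<sigma>(1) il i(3), of wr] unfolding Lrho_def Sp_def Ts_def by simp
  have 2: "Lrho wr mv n = Sp wr + Tp wr" using \<pi>(2) weight_split[OF \<pi>(1) il(1), of wr] unfolding Sp_def Tp_def by simp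
  have 3: "Lbulk w0 mu n = Ss wB + Ts wB" using \<sigma>(2) weight_split[OF \<sigma>(1) il(2), of wB] unfolding Ss_def Ts_def LB by simp
  have 4: "Lbulk w0 mv n \<ge> Ss wB + Tp wB"
    using lpp_ge[OF B, of wB] weight_spl[OF \<sigma>(1) \<pi>(1) il(2,1) i(3)[symmetric], of wB] unfolding LB Ss_def Tp_def by simp
  have 5: "Tp wB = Tp wr" unfolding Tp_def
  proof (rule sum.cong)
    fix j assume "j \<in> {i<..<length \<pi>}"
    then have "\<not> ax (\<pi>!j)" using k(3) i by auto
    then show "wB (\<pi>!j) = wr (\<pi>!j)" using bulk[rule_format, of "\<pi>!j"] unfolding wB_def by auto
  qed simp
  have 6: "Ts wB \<le> Ts wr" unfolding Ts_def by (rule sum_mono) (rule le)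
  show ?thesis using 1 2 3 4 5 6 by linarith
qed

lemma compB:
  assumes bulk: "\<forall>p. \<not> ax p \<longrightarrow> wr p = w0 p" and nonneg: "\<forall>p. ax p \<longrightarrow> wr p \<ge> 0"
    and \<pi>: "\<pi> \<in> P mu n" "path_weight wr \<pi> = Lrho wr mu n"
    and k: "k < length \<pi>" "\<pi>!k = (0,k)" "\<forall>l. k<l \<and> l<length \<pi> \<longrightarrow> \<not> ax (\<pi>!l)"
    and mm: "mv \<le> mu"
  shows "Lrho wr mu n - Lrho wr mv n \<le> Lbulk w0 mu n - Lbulk w0 mv n"
proof -
  define wB where "wB = (\<lambda>p. if fst p = 0 \<or> snd p = 0 then 0 else w0 p)"
  have LB: "Lbulk w0 m n = lpp wB (0,0) (m,n)" for m unfolding Lbulk_def wB_def ..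
  have le: "wB p \<le> wr p" for p using bulk[rule_format, of p] nonneg[rule_format, of p] unfolding wB_def by (cases "ax p") auto
  obtain \<sigma> where \<sigma>: "\<sigma> \<in> P mv n" "path_weight wB \<sigma> = lpp wB (0,0) (mv,n)"
    using lpp_attained by blast
  have Lp: "length \<pi> = mu + n + 1" using path_len[OF \<pi>(1)] .
  have Ls: "length \<sigma> = mv + n + 1" using path_len[OF \<sigma>(1)] .
  have kk: "k \<le> mv + n" using path_bounds[OF \<pi>(1) k(1)] k(2) by simp
  have c0: "fst (\<pi>!k) \<le> fst (\<sigma>!k)" using k by simp
  have e1: "fst (\<sigma>!(mv+n)) = mv" using path_last[OF \<sigma>(1)] Ls by simp
  have e2: "fst (\<pi>!(mv+n)) \<ge> mv" using path_sum[OF \<pi>(1), of "mv+n"] path_bounds[OF \<pi>(1), of "mv+n"] Lp mm by auto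
  obtain i where i: "k \<le> i" "i \<le> mv+n" "\<sigma>!i = \<pi>!i"
    using crossing[OF \<sigma>(1) \<pi>(1), of k "mv+n"] mm Lp Ls e1 e2 c0 kk by auto
  have il: "i < length \<pi>" "i < length \<sigma>" using i Lp Ls mm by auto
  have A: "spl \<pi> i \<sigma> \<in> P mv n" by (rule spl_path[OF \<pi>(1) \<sigma>(1) il i(3)[symmetric]])
  have B: "spl \<sigma> i \<pi> \<in> P mu n" by (rule spl_path[OF \<sigma>(1) \<pi>(1) il(2,1) i(3)])
  define Tp where "Tp (w::nat\<times>nat\<Rightarrow>real) = (\<Sum>j\<in>{i<..<length \<pi>}. w (\<pi>!j))" for w
  define Ts where "Ts (w::nat\<times>nat\<Rightarrow>real) = (\<Sum>j\<in>{i<..<length \<sigma>}. w (\<sigma>!j))" for w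
  define Sp where "Sp (w::nat\<times>nat\<Rightarrow>real) = (\<Sum>j\<in>{0<..i}. w (\<pi>!j))" for w
  define Ss where "Ss (w::nat\<times>nat\<Rightarrow>real) = (\<Sum>j\<in>{0<..i}. w (\<sigma>!j))" for w
  have 1: "Lrho wr mv n \<ge> Sp wr + Ts wr"
    using lpp_ge[OF A, of wr] weight_spl[OF \<pi>(1) \<sigma>(1) il i(3)[symmetric], of wr] unfolding Lrho_def Sp_def Ts_def by simp
  have 2: "Lrho wr mu n = Sp wr + Tp wr" using \<pi>(2) weight_split[OF \<pi>(1) il(1), of wr] unfolding Sp_def Tp_def by simp
  have 3: "Lbulk w0 mv n = Ss wB + Ts wB" using \<sigma>(2) weight_split[OF \<sigma>(1) il(2), of wB] unfolding Ss_def Ts_def LB by simp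
  have 4: "Lbulk w0 mu n \<ge> Ss wB + Tp wB"
    using lpp_ge[OF B, of wB] weight_spl[OF \<sigma>(1) \<pi>(1) il(2,1) i(3), of wB] unfolding LB Ss_def Tp_def by simp
  have 5: "Tp wB = Tp wr" unfolding Tp_def
  proof (rule sum.cong)
    fix j assume "j \<in> {i<..<length \<pi>}"
    then have "\<not> ax (\<pi>!j)" using k(3) i by auto
    then show "wB (\<pi>!j) = wr (\<pi>!j)" using bulk[rule_format, of "\<pi>!j"] unfolding wB_def by auto
  qed simp
  have 6: "Ts wB \<le> Ts wr" unfolding Ts_def by (rule sum_mono) (rule le)
  show ?thesis using 1 2 3 4 5 6 by linarith
qed

lemma exit_point_eq: "exit_point w m n = last (filter ax (geodesic w m n))"
  unfolding exit_point_def ..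

lemma detA:
  assumes bulk: "\<forall>p. \<not> ax p \<longrightarrow> wr p = w0 p" and nonneg: "\<forall>p. ax p \<longrightarrow> wr p \<ge> 0"
    and nt: "notie wr" and n: "1 \<le> n" and mm: "m0 \<le> mv" "mv \<le> mu"
    and Z: "Zexit wr m0 n \<ge> 0"
  shows "Lbulk w0 mu n - Lbulk w0 mv n \<le> Lrho wr mu n - Lrho wr mv n"
proof -
  let ?g0 = "geodesic wr m0 n" and ?gv = "geodesic wr mv n"
  have g0: "?g0 \<in> P m0 n" "path_weight wr ?g0 = Lrho wr m0 n" using geodesic[OF nt] by auto
  have gv: "?gv \<in> P mv n" "path_weight wr ?gv = Lrho wr mv n" using geodesic[OF nt] by auto
  have h0: "?g0 ! 1 = (1,0)"
    using exit_struct[OF g0(1)] n Z unfolding Zexit_def exit_point_eq Let_def by auto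
  have "1 \<le> mv + n" using n by simp
  from exit_struct[OF gv(1) this] show ?thesis
  proof (elim disjE conjE exE)
    fix k assume "k < length ?gv" "?gv!k = (k,0)" "\<forall>l. k<l \<and> l<length ?gv \<longrightarrow> \<not> ax (?gv!l)"
    then show ?thesis using compA[OF bulk nonneg gv] mm(2) by blast
  next
    assume "?gv!1 = (0,1)"
    then have False using mono_contra[OF nt g0 gv mm(1) _ h0] n by auto
    then show ?thesis ..
  qed
qed

lemma detB:
  assumes bulk: "\<forall>p. \<not> ax p \<longrightarrow> wr p = w0 p" and nonneg: "\<forall>p. ax p \<longrightarrow> wr p \<ge> 0"
    and nt: "notie wr" and n: "1 \<le> n" and mm: "mv \<le> mu" "mu \<le> m2"
    and Z: "Zexit wr m2 n \<le> 0"
  shows "Lrho wr mu n - Lrho wr mv n \<le> Lbulk w0 mu n - Lbulk w0 mv n"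
proof -
  let ?g2 = "geodesic wr m2 n" and ?gu = "geodesic wr mu n"
  have g2: "?g2 \<in> P m2 n" "path_weight wr ?g2 = Lrho wr m2 n" using geodesic[OF nt] by auto
  have gu: "?gu \<in> P mu n" "path_weight wr ?gu = Lrho wr mu n" using geodesic[OF nt] by auto
  have h2: "?g2 ! 1 = (0,1)"
    using exit_struct[OF g2(1)] n Z unfolding Zexit_def exit_point_eq Let_def by auto
  have "1 \<le> mu + n" using n by simp
  from exit_struct[OF gu(1) this] show ?thesis
  proof (elim disjE conjE exE)
    fix k assume "k < length ?gu" "?gu!k = (0,k)" "\<forall>l. k<l \<and> l<length ?gu \<longrightarrow> \<not> ax (?gu!l)"
    then show ?thesis using compB[OF bulk nonneg gu] mm(1) by blast
  next
    assume "?gu!1 = (1,0)"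
    then have False using mono_contra[OF nt gu g2 mm(2) _ _ h2] n by auto
    then show ?thesis ..
  qed
qed

lemma path_distinct:
  assumes "\<pi> \<in> P m n" shows "distinct \<pi>"
  unfolding distinct_conv_nth
proof (intro allI impI)
  fix i j assume "i < length \<pi>" "j < length \<pi>" "i \<noteq> j"
  then show "\<pi>!i \<noteq> \<pi>!j" using path_sum[OF assms, of i] path_sum[OF assms, of j] by auto
qed

lemma path_weight_set:
  assumes "\<pi> \<in> P m n" shows "path_weight w \<pi> = (\<Sum>q\<in>set (tl \<pi>). w q)"
  unfolding path_weight_def
  by (rule sum_list_distinct_conv_sum_set) (use path_distinct[OF assms] in \<open>simp add: distinct_tl\<close>)

lemma tl_set_nz:
  assumes "\<pi> \<in> P m n" "q \<in> set (tl \<pi>)" shows "q \<noteq> (0,0)"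
proof -
  obtain j where "j < length (tl \<pi>)" "q = tl \<pi> ! j" using assms(2) by (auto simp: in_set_conv_nth)
  then have "q = \<pi> ! Suc j" "Suc j < length \<pi>" by (auto simp: nth_tl)
  then show ?thesis using path_sum[OF assms(1), of "Suc j"] by auto
qed

lemma differ_point:
  assumes \<pi>1: "\<pi>1 \<in> P m n" and \<pi>2: "\<pi>2 \<in> P m n" and ne: "\<pi>1 \<noteq> \<pi>2"
  shows "\<exists>p. p \<in> set (tl \<pi>1) \<and> p \<notin> set (tl \<pi>2)"
proof -
  have L: "length \<pi>1 = length \<pi>2" using path_len[OF \<pi>1] path_len[OF \<pi>2] by simp
  obtain i where i: "i < length \<pi>1" "\<pi>1!i \<noteq> \<pi>2!i" using ne L nth_equalityI by blast
  have "i \<noteq> 0"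
  proof
    assume "i = 0" then show False using i path_0[OF \<pi>1] path_0[OF \<pi>2] by simp
  qed
  then have "\<pi>1!i = tl \<pi>1 ! (i - 1)" "i - 1 < length (tl \<pi>1)" using i by (auto simp: nth_tl)
  then have p1: "\<pi>1!i \<in> set (tl \<pi>1)" by (metis nth_mem)
  have p2: "\<pi>1!i \<notin> set (tl \<pi>2)"
  proof
    assume "\<pi>1!i \<in> set (tl \<pi>2)"
    then obtain j where "j < length (tl \<pi>2)" "\<pi>1!i = tl \<pi>2 ! j" by (auto simp: in_set_conv_nth)
    then have j: "\<pi>1!i = \<pi>2 ! Suc j" "Suc j < length \<pi>2" by (auto simp: nth_tl)
    have "Suc j = i" using path_sum[OF \<pi>2 j(2)] path_sum[OF \<pi>1 i(1)] j(1) by simp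
    then show False using j i by simp
  qed
  show ?thesis using p1 p2 by blast
qed

context prob_space
begin

lemma sum_indep_nozero:
  fixes X :: "nat \<times> nat \<Rightarrow> 'a \<Rightarrow> real"
  assumes ind: "indep_vars (\<lambda>_. borel) X I"
    and p: "p \<in> I" and J: "J \<subseteq> I" "p \<notin> J" "finite J"
    and D: "distributed M lborel (X p) f"
    and g: "g \<in> borel_measurable (PiM J (\<lambda>_. borel))"
  shows "AE x in M. X p x + g (restrict (\<lambda>i. X i x) J) \<noteq> 0"
proof -
  define Y where "Y x = g (restrict (\<lambda>i. X i x) J)" for x
  have iv0: "indep_var (PiM J (\<lambda>_. borel)) (\<lambda>x. restrict (\<lambda>i. X i x) J) (PiM {p} (\<lambda>_. borel)) (\<lambda>x. restrict (\<lambda>i. X i x) {p})"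
    by (rule indep_var_restrict[OF ind]) (use p J in auto)
  have iv: "indep_var borel (g \<circ> (\<lambda>x. restrict (\<lambda>i. X i x) J)) borel ((\<lambda>h. h p) \<circ> (\<lambda>x. restrict (\<lambda>i. X i x) {p}))"
    by (rule indep_var_compose[OF iv0 g]) (rule measurable_component_singleton, simp)
  have e1: "g \<circ> (\<lambda>x. restrict (\<lambda>i. X i x) J) = Y" by (simp add: Y_def fun_eq_iff)
  have e2: "(\<lambda>h. h p) \<circ> (\<lambda>x. restrict (\<lambda>i. X i x) {p}) = X p" by (simp add: fun_eq_iff)
  have iv': "indep_var borel Y borel (X p)" using iv unfolding e1 e2 .
  have rvY: "random_variable borel Y" and rvX: "random_variable borel (X p)"
    using iv' by (auto dest: indep_var_rv1 indep_var_rv2)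
  have prod: "distr M borel Y \<Otimes>\<^sub>M distr M borel (X p) = distr M (borel \<Otimes>\<^sub>M borel) (\<lambda>x. (Y x, X p x))"
    using iv' unfolding indep_var_distribution_eq by auto
  define DS where "DS = {z::real \<times> real. snd z + fst z = 0}"
  have "{z \<in> space (borel \<Otimes>\<^sub>M borel). snd z + fst z = (0::real)} \<in> sets (borel \<Otimes>\<^sub>M borel)" by measurable
  then have DSm: "DS \<in> sets (borel \<Otimes>\<^sub>M borel)" unfolding DS_def by (simp add: space_pair_measure)
  have dX: "distr M borel (X p) = density lborel f"
  proof -
    have "distr M borel (X p) = distr M lborel (X p)" by (rule distr_cong) auto
    also have "\<dots> = density lborel f" using distributed_distr_eq_density[OF D] .
    finally show ?thesis .
  qed
  have fm: "f \<in> borel_measurable lborel" using distributed_borel_measurable[OF D] .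
  interpret dXs: sigma_finite_measure "distr M borel (X p)"
    by (rule prob_space_imp_sigma_finite, rule prob_space_distr[OF rvX])
  have "emeasure (distr M borel Y \<Otimes>\<^sub>M distr M borel (X p)) DS =
        (\<integral>\<^sup>+y. emeasure (distr M borel (X p)) (Pair y -` DS) \<partial>distr M borel Y)"
  proof (rule dXs.emeasure_pair_measure_alt)
    have "sets (distr M borel Y \<Otimes>\<^sub>M distr M borel (X p)) = sets (borel \<Otimes>\<^sub>M borel)"
      by (rule sets_pair_measure_cong) simp_all
    then show "DS \<in> sets (distr M borel Y \<Otimes>\<^sub>M distr M borel (X p))" using DSm by simp
  qed
  also have "\<dots> = (\<integral>\<^sup>+y. 0 \<partial>distr M borel Y)"
  proof (rule nn_integral_cong)
    fix y :: real
    have "Pair y -` DS = {-y}" unfolding DS_def by auto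
    then show "emeasure (distr M borel (X p)) (Pair y -` DS) = 0"
      unfolding dX using emeasure_density[OF fm, of "{-y}"] nn_integral_null_set[of "{-y}" lborel f]
      by simp
  qed
  also have "\<dots> = 0" by simp
  finally have "emeasure (distr M (borel \<Otimes>\<^sub>M borel) (\<lambda>x. (Y x, X p x))) DS = 0" using prod by simp
  then have N0: "emeasure M {x\<in>space M. X p x + Y x = 0} = 0"
    using rvX rvY DSm by (subst (asm) emeasure_distr) (auto simp: DS_def vimage_def Int_def conj_commute)
  have "{x\<in>space M. X p x + Y x = 0} \<in> sets M" using rvX rvY by measurable
  then have "{x\<in>space M. X p x + Y x = 0} \<in> null_sets M" using N0 by auto
  then show ?thesis unfolding Y_def[symmetric] by (rule AE_I') auto
qed

end

context prob_space
begin

lemma AE_notie: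
  fixes X :: "nat \<times> nat \<Rightarrow> 'a \<Rightarrow> real"
  assumes ind: "indep_vars (\<lambda>_. borel) X (UNIV - {(0,0)})"
    and D: "\<forall>p. p \<noteq> (0,0) \<longrightarrow> (\<exists>f. distributed M lborel (X p) f)"
  shows "AE x in M. notie (\<lambda>q. X q x)"
proof -
  have pair: "AE x in M. path_weight (\<lambda>q. X q x) \<pi>1 = path_weight (\<lambda>q. X q x) \<pi>2 \<longrightarrow> \<pi>1 = \<pi>2"
    if \<pi>1: "\<pi>1 \<in> P m n" and \<pi>2: "\<pi>2 \<in> P m n" for m n \<pi>1 \<pi>2
  proof (cases "\<pi>1 = \<pi>2")
    case True then show ?thesis by simp
  next
    case False
    obtain p where p: "p \<in> set (tl \<pi>1)" "p \<notin> set (tl \<pi>2)" using differ_point[OF \<pi>1 \<pi>2 False] by blast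
    define S1 where "S1 = set (tl \<pi>1)"
    define S2 where "S2 = set (tl \<pi>2)"
    define J where "J = (S1 \<union> S2) - {p}"
    define g where "g h = (\<Sum>q\<in>S1 - {p}. h q) - (\<Sum>q\<in>S2. (h q :: real))" for h
    have fJ: "finite J" unfolding J_def S1_def S2_def by simp
    have pnz: "p \<noteq> (0,0)" using tl_set_nz[OF \<pi>1 p(1)] .
    have Jsub: "J \<subseteq> UNIV - {(0,0)}" unfolding J_def S1_def S2_def using tl_set_nz[OF \<pi>1] tl_set_nz[OF \<pi>2] by auto
    obtain f where Df: "distributed M lborel (X p) f" using D pnz by blast
    have gm: "g \<in> borel_measurable (PiM J (\<lambda>_. borel))" unfolding g_def
    proof (intro borel_measurable_diff borel_measurable_sum)
      fix q assume "q \<in> S1 - {p}" then have "q \<in> J" unfolding J_def by auto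
      then show "(\<lambda>h. h q) \<in> borel_measurable (PiM J (\<lambda>_. borel))" by (rule measurable_component_singleton)
    next
      fix q assume "q \<in> S2" then have "q \<in> J" using p(2) unfolding J_def S2_def by auto
      then show "(\<lambda>h. h q) \<in> borel_measurable (PiM J (\<lambda>_. borel))" by (rule measurable_component_singleton)
    qed
    have ae: "AE x in M. X p x + g (restrict (\<lambda>i. X i x) J) \<noteq> 0"
      by (rule sum_indep_nozero[OF ind _ Jsub _ fJ Df gm]) (use pnz in \<open>auto simp: J_def\<close>)
    have key: "path_weight (\<lambda>q. X q x) \<pi>1 \<noteq> path_weight (\<lambda>q. X q x) \<pi>2"
      if ne: "X p x + g (restrict (\<lambda>i. X i x) J) \<noteq> 0" for x
    proof
      assume eq: "path_weight (\<lambda>q. X q x) \<pi>1 = path_weight (\<lambda>q. X q x) \<pi>2"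
      have r1: "(\<Sum>q\<in>S1 - {p}. restrict (\<lambda>i. X i x) J q) = (\<Sum>q\<in>S1 - {p}. X q x)"
        by (rule sum.cong) (auto simp: J_def)
      have r2: "(\<Sum>q\<in>S2. restrict (\<lambda>i. X i x) J q) = (\<Sum>q\<in>S2. X q x)"
        by (rule sum.cong) (use p(2) in \<open>auto simp: J_def S2_def\<close>)
      have "(\<Sum>q\<in>S1. X q x) = X p x + (\<Sum>q\<in>S1 - {p}. X q x)"
        using p(1) unfolding S1_def by (simp add: sum.remove)
      moreover have "path_weight (\<lambda>q. X q x) \<pi>1 = (\<Sum>q\<in>S1. X q x)" "path_weight (\<lambda>q. X q x) \<pi>2 = (\<Sum>q\<in>S2. X q x)"
        unfolding S1_def S2_def using path_weight_set[OF \<pi>1] path_weight_set[OF \<pi>2] by auto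
      ultimately have "X p x + g (restrict (\<lambda>i. X i x) J) = 0" using eq unfolding g_def r1 r2 by simp
      then show False using ne by simp
    qed
    show ?thesis by (rule eventually_mono[OF ae]) (use key in blast)
  qed
  have "\<forall>m n. AE x in M. \<forall>\<pi>1\<in>P m n. \<forall>\<pi>2\<in>P m n. path_weight (\<lambda>q. X q x) \<pi>1 = path_weight (\<lambda>q. X q x) \<pi>2 \<longrightarrow> \<pi>1 = \<pi>2"
  proof (intro allI)
    fix m n
    show "AE x in M. \<forall>\<pi>1\<in>P m n. \<forall>\<pi>2\<in>P m n. path_weight (\<lambda>q. X q x) \<pi>1 = path_weight (\<lambda>q. X q x) \<pi>2 \<longrightarrow> \<pi>1 = \<pi>2"
      by (intro AE_finite_allI[OF finite_P] pair)
  qed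
  then show ?thesis unfolding notie_def by (simp add: AE_all_countable)
qed

lemma AE_nonneg:
  fixes X :: "nat \<times> nat \<Rightarrow> 'a \<Rightarrow> real"
  assumes O: "\<forall>x. X (0,0) x = 0"
    and D: "\<forall>p. p \<noteq> (0,0) \<longrightarrow> (\<exists>l. distributed M lborel (X p) (exponential_density l))"
  shows "AE x in M. \<forall>p. X p x \<ge> 0"
proof -
  have "AE x in M. X p x \<ge> 0" for p
  proof (cases "p = (0,0)")
    case True then show ?thesis using O by simp
  next
    case False
    then obtain l where Dl: "distributed M lborel (X p) (exponential_density l)" using D by blast
    have "(AE x in M. 0 \<le> X p x) \<longleftrightarrow> (AE x in lborel. 0 < ennreal (exponential_density l x) \<longrightarrow> 0 \<le> x)"
      by (rule distributed_AE2[OF Dl]) measurable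
    also have "\<dots>" by (rule AE_I2) (auto simp: erlang_density_def split: if_splits)
    finally show ?thesis .
  qed
  then show ?thesis by (subst AE_all_countable) simp
qed

end

lemma powr_third: "x > 0 \<Longrightarrow> x powr (real k / 3) = (x powr (1/3)) ^ k" for x :: real
  by (subst powr_power) auto

lemma beta_ids:
  fixes \<gamma> :: real assumes g: "\<gamma> > 0"
  shows "beta1 \<gamma> = 2 * ((1 + \<gamma>) powr (5/3) * \<gamma> powr (1/3)) * (\<gamma> / (1 + \<gamma>))"
    and "beta1 \<gamma> = 2 * (beta2 \<gamma>)\<^sup>2 * (\<gamma> / (1 + \<gamma>))\<^sup>2"
    and "beta1 \<gamma> > 0" "beta2 \<gamma> > 0"
proof -
  define p where "p = (1 + \<gamma>) powr (1/3)"
  define q where "q = \<gamma> powr (1/3)"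
  have p0: "p > 0" "q > 0" using g by (auto simp: p_def q_def)
  have P: "(1+\<gamma>) powr (real k / 3) = p ^ k" for k using powr_third[of "1+\<gamma>" k] g by (simp add: p_def)
  have Q: "\<gamma> powr (real k / 3) = q ^ k" for k using powr_third[of \<gamma> k] g by (simp add: q_def)
  have p2: "(1+\<gamma>) powr (2/3) = p^2" using P[of 2] by simp
  have p4: "(1+\<gamma>) powr (4/3) = p^4" using P[of 4] by simp
  have p5: "(1+\<gamma>) powr (5/3) = p^5" using P[of 5] by simp
  have p3: "1 + \<gamma> = p^3" using P[of 3] g by simp
  have q4: "\<gamma> powr (4/3) = q^4" using Q[of 4] by simp
  have q3: "\<gamma> = q^3" using Q[of 3] g by simp
  have qm: "\<gamma> powr (-1/3) = 1 / q" using powr_minus_divide[of \<gamma> "1/3"] by (simp add: q_def)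
  have b1: "beta1 \<gamma> = 2 * p^2 * q^4" unfolding beta1_def p2 q4 ..
  have b2: "beta2 \<gamma> = p^4 / q" unfolding beta2_def p4 qm by simp
  have gq: "\<gamma> / (1 + \<gamma>) = q^3 / p^3" using p3 q3 by simp
  show "beta1 \<gamma> = 2 * ((1 + \<gamma>) powr (5/3) * \<gamma> powr (1/3)) * (\<gamma> / (1 + \<gamma>))"
    unfolding b1 p5 q_def[symmetric] gq using p0 by (simp add: field_simps power2_eq_square power_numeral_reduce)
  show "beta1 \<gamma> = 2 * (beta2 \<gamma>)\<^sup>2 * (\<gamma> / (1 + \<gamma>))\<^sup>2"
    unfolding b1 b2 gq using p0 by (simp add: field_simps eval_nat_numeral)
  show "beta1 \<gamma> > 0" "beta2 \<gamma> > 0" unfolding b1 b2 using p0 by auto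
qed

lemma alg_a:
  fixes b1 b2 A q t S S2 Sm k u v Lbu Lbv Lru Lrv Lr0 c0 C e :: real
  assumes b2: "b2 > 0" and q: "q > 0" and S: "S > 0" "S2 = S\<^sup>2" "Sm = 1 / S" and k: "k \<ge> 0"
    and t: "t = k * Sm" "t \<le> q / 2" and uv: "v \<le> u"
    and hA: "b1 = 2 * A * q" and hB: "b1 = 2 * b2\<^sup>2 * q\<^sup>2" and e: "e = 1 / (q - t)"
    and dL: "Lbu - Lbv \<le> Lru - Lrv"
    and Cb: "4 * b2 * k\<^sup>2 * (u - v) / q \<le> C"
  shows "(Lbu - (c0 + 2 * u * A * S2 - b2 * u\<^sup>2 * S)) / (b2 * S) - (Lbv - (c0 + 2 * v * A * S2 - b2 * v\<^sup>2 * S)) / (b2 * S)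
    \<le> (Lru - (Lr0 + e * b1 * u * S2)) / (b2 * S) - (Lrv - (Lr0 + e * b1 * v * S2)) / (b2 * S)
       + (u\<^sup>2 - v\<^sup>2) + 2 * b2 * k * (u - v) + C * Sm"
proof -
  define D where "D = b2 * S"
  have D: "D > 0" using b2 S by (simp add: D_def)
  have qt: "q - t \<ge> q / 2" using t by simp
  have qt0: "q - t > 0" using qt q by simp
  have L: "(Lbu - (c0 + 2 * u * A * S2 - b2 * u\<^sup>2 * S)) / D - (Lbv - (c0 + 2 * v * A * S2 - b2 * v\<^sup>2 * S)) / D
     = (Lbu - Lbv) / D - 2 * A * (u - v) * S2 / D + (u\<^sup>2 - v\<^sup>2)"
  proof -
    have "(Lbu - (c0 + 2 * u * A * S2 - b2 * u\<^sup>2 * S)) / D - (Lbv - (c0 + 2 * v * A * S2 - b2 * v\<^sup>2 * S)) / D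
      = ((Lbu - Lbv) - 2 * A * (u - v) * S2 + b2 * (u\<^sup>2 - v\<^sup>2) * S) / D"
      by (simp add: diff_divide_distrib[symmetric] algebra_simps)
    also have "\<dots> = (Lbu - Lbv) / D - 2 * A * (u - v) * S2 / D + b2 * (u\<^sup>2 - v\<^sup>2) * S / D"
      by (simp add: add_divide_distrib diff_divide_distrib)
    also have "b2 * (u\<^sup>2 - v\<^sup>2) * S / D = u\<^sup>2 - v\<^sup>2" using b2 S unfolding D_def by simp
    finally show ?thesis .
  qed
  have R: "(Lru - (Lr0 + e * b1 * u * S2)) / D - (Lrv - (Lr0 + e * b1 * v * S2)) / D
     = (Lru - Lrv) / D - e * b1 * (u - v) * S2 / D"
    using D by (simp add: field_simps)
  have id: "e * b1 = 2 * A + 2 * b2\<^sup>2 * t + 2 * b2\<^sup>2 * t\<^sup>2 / (q - t)"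
  proof -
    have "e * b1 = b1 / (q - t)" using e by simp
    also have "\<dots> = 2 * b2\<^sup>2 * q\<^sup>2 / (q - t)" using hB by simp
    also have "\<dots> = 2 * b2\<^sup>2 * q + 2 * b2\<^sup>2 * t + 2 * b2\<^sup>2 * t\<^sup>2 / (q - t)"
      using qt0 by (simp add: field_simps power2_eq_square)
    also have "2 * b2\<^sup>2 * q = 2 * A"
    proof -
      have "(2 * A) * q = b1" using hA by simp
      also have "b1 = (2 * b2\<^sup>2 * q) * q" using hB by (simp add: power2_eq_square)
      finally have "(2 * A) * q = (2 * b2\<^sup>2 * q) * q" .
      then show ?thesis using q mult_right_cancel[of q "2 * A" "2 * b2\<^sup>2 * q"] by simp
    qed
    finally show ?thesis .
  qed
  have t1: "2 * b2\<^sup>2 * t * (u - v) * S2 / D = 2 * b2 * k * (u - v)"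
    unfolding D_def t(1) S(2,3) using S b2 by (simp add: field_simps power2_eq_square)
  have t2: "2 * b2\<^sup>2 * t\<^sup>2 / (q - t) * (u - v) * S2 / D = 2 * b2 * k\<^sup>2 * (u - v) / (q - t) * Sm"
  proof -
    have tt: "t\<^sup>2 * S2 = k\<^sup>2" unfolding t(1) S(2,3) using S by (simp add: power2_eq_square)
    have "2 * b2\<^sup>2 * t\<^sup>2 / (q - t) * (u - v) * S2 / D = 2 * b2\<^sup>2 * (t\<^sup>2 * S2) * (u - v) / ((q - t) * D)"
      by (simp add: field_simps)
    also have "\<dots> = 2 * b2\<^sup>2 * k\<^sup>2 * (u - v) / ((q - t) * (b2 * S))" unfolding tt D_def ..
    also have "\<dots> = 2 * b2 * k\<^sup>2 * (u - v) / ((q - t) * S)" using b2 by (simp add: power2_eq_square)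
    also have "\<dots> = 2 * b2 * k\<^sup>2 * (u - v) / (q - t) * Sm" unfolding S(3) by simp
    finally show ?thesis .
  qed
  have t3: "2 * b2 * k\<^sup>2 * (u - v) / (q - t) \<le> C"
  proof -
    have "2 * b2 * k\<^sup>2 * (u - v) / (q - t) \<le> 2 * b2 * k\<^sup>2 * (u - v) / (q / 2)"
      using qt q uv b2 k by (intro divide_left_mono) (auto intro!: mult_nonneg_nonneg)
    also have "\<dots> = 4 * b2 * k\<^sup>2 * (u - v) / q" by simp
    finally show ?thesis using Cb by simp
  qed
  have Sm0: "Sm > 0" using S by simp
  have t4: "2 * b2 * k\<^sup>2 * (u - v) / (q - t) * Sm \<le> C * Sm" by (rule mult_right_mono[OF t3]) (use Sm0 in simp)
  have main: "e * b1 * (u - v) * S2 / D = 2 * A * (u - v) * S2 / D + 2 * b2\<^sup>2 * t * (u - v) * S2 / D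
      + 2 * b2\<^sup>2 * t\<^sup>2 / (q - t) * (u - v) * S2 / D"
    unfolding id by (simp only: distrib_right left_diff_distrib add_divide_distrib diff_divide_distrib)
  have dd: "(Lbu - Lbv) / D \<le> (Lru - Lrv) / D" using dL D by (simp add: divide_right_mono)
  show ?thesis unfolding D_def[symmetric] L R using main t1 t2 t4 dd by linarith
qed

lemma alg_b:
  fixes b1 b2 A q t S S2 Sm k u v Lbu Lbv Lru Lrv Lr0 c0 C e :: real
  assumes b2: "b2 > 0" and q: "q > 0" and S: "S > 0" "S2 = S\<^sup>2" "Sm = 1 / S" and k: "k \<ge> 0"
    and t: "t = k * Sm" and uv: "v \<le> u"
    and hA: "b1 = 2 * A * q" and hB: "b1 = 2 * b2\<^sup>2 * q\<^sup>2" and e: "e = 1 / (q + t)"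
    and dL: "Lru - Lrv \<le> Lbu - Lbv"
    and C: "C \<ge> 0"
  shows "(Lbu - (c0 + 2 * u * A * S2 - b2 * u\<^sup>2 * S)) / (b2 * S) - (Lbv - (c0 + 2 * v * A * S2 - b2 * v\<^sup>2 * S)) / (b2 * S)
    \<ge> (Lru - (Lr0 + e * b1 * u * S2)) / (b2 * S) - (Lrv - (Lr0 + e * b1 * v * S2)) / (b2 * S)
       + (u\<^sup>2 - v\<^sup>2) - 2 * b2 * k * (u - v) - C * Sm"
proof -
  define D where "D = b2 * S"
  have D: "D > 0" using b2 S by (simp add: D_def)
  have t0: "t \<ge> 0" using t k S by simp
  have qt0: "q + t > 0" using t0 q by simp
  have L: "(Lbu - (c0 + 2 * u * A * S2 - b2 * u\<^sup>2 * S)) / D - (Lbv - (c0 + 2 * v * A * S2 - b2 * v\<^sup>2 * S)) / D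
     = (Lbu - Lbv) / D - 2 * A * (u - v) * S2 / D + (u\<^sup>2 - v\<^sup>2)"
  proof -
    have "(Lbu - (c0 + 2 * u * A * S2 - b2 * u\<^sup>2 * S)) / D - (Lbv - (c0 + 2 * v * A * S2 - b2 * v\<^sup>2 * S)) / D
      = ((Lbu - Lbv) - 2 * A * (u - v) * S2 + b2 * (u\<^sup>2 - v\<^sup>2) * S) / D"
      by (simp add: diff_divide_distrib[symmetric] algebra_simps)
    also have "\<dots> = (Lbu - Lbv) / D - 2 * A * (u - v) * S2 / D + b2 * (u\<^sup>2 - v\<^sup>2) * S / D"
      by (simp add: add_divide_distrib diff_divide_distrib)
    also have "b2 * (u\<^sup>2 - v\<^sup>2) * S / D = u\<^sup>2 - v\<^sup>2" using b2 S unfolding D_def by simp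
    finally show ?thesis .
  qed
  have R: "(Lru - (Lr0 + e * b1 * u * S2)) / D - (Lrv - (Lr0 + e * b1 * v * S2)) / D
     = (Lru - Lrv) / D - e * b1 * (u - v) * S2 / D"
    using D by (simp add: field_simps)
  have id: "e * b1 = 2 * A - 2 * b2\<^sup>2 * t + 2 * b2\<^sup>2 * t\<^sup>2 / (q + t)"
  proof -
    have "e * b1 = b1 / (q + t)" using e by simp
    also have "\<dots> = 2 * b2\<^sup>2 * q\<^sup>2 / (q + t)" using hB by simp
    also have "\<dots> = 2 * b2\<^sup>2 * q - 2 * b2\<^sup>2 * t + 2 * b2\<^sup>2 * t\<^sup>2 / (q + t)"
      using qt0 by (simp add: field_simps power2_eq_square)
    also have "2 * b2\<^sup>2 * q = 2 * A"
    proof -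
      have "(2 * A) * q = b1" using hA by simp
      also have "b1 = (2 * b2\<^sup>2 * q) * q" using hB by (simp add: power2_eq_square)
      finally have "(2 * A) * q = (2 * b2\<^sup>2 * q) * q" .
      then show ?thesis using q mult_right_cancel[of q "2 * A" "2 * b2\<^sup>2 * q"] by simp
    qed
    finally show ?thesis .
  qed
  have t1: "2 * b2\<^sup>2 * t * (u - v) * S2 / D = 2 * b2 * k * (u - v)"
    unfolding D_def t(1) S(2,3) using S b2 by (simp add: field_simps power2_eq_square)
  have t2: "2 * b2\<^sup>2 * t\<^sup>2 / (q + t) * (u - v) * S2 / D \<ge> 0"
    using uv D qt0 S by (intro divide_nonneg_pos mult_nonneg_nonneg) auto
  have Sm0: "Sm > 0" using S by simp
  have t4: "C * Sm \<ge> 0" using C Sm0 by simp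
  have main: "e * b1 * (u - v) * S2 / D = 2 * A * (u - v) * S2 / D - 2 * b2\<^sup>2 * t * (u - v) * S2 / D
      + 2 * b2\<^sup>2 * t\<^sup>2 / (q + t) * (u - v) * S2 / D"
    unfolding id by (simp only: distrib_right left_diff_distrib add_divide_distrib diff_divide_distrib)
  have dd: "(Lru - Lrv) / D \<le> (Lbu - Lbv) / D" using dL D by (simp add: divide_right_mono)
  show ?thesis unfolding D_def[symmetric] L R using main t1 t2 t4 dd by linarith
qed


lemma alg_a':
  fixes b1 b2 X Y q t S S2 Sm k u v Lbu Lbv Lru Lrv Lr0 c0 C e :: real
  assumes "b2 > 0" "q > 0" "S > 0" "S2 = S\<^sup>2" "Sm = 1 / S" "k \<ge> 0"
    "t = k * Sm" "t \<le> q / 2" "v \<le> u"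
    "b1 = 2 * (X * Y) * q" "b1 = 2 * b2\<^sup>2 * q\<^sup>2" "e = 1 / (q - t)"
    "Lbu - Lbv \<le> Lru - Lrv"
    "4 * b2 * k\<^sup>2 * (u - v) / q \<le> C"
  shows "(Lbu - (c0 + 2 * u * X * Y * S2 - b2 * u\<^sup>2 * S)) / (b2 * S) - (Lbv - (c0 + 2 * v * X * Y * S2 - b2 * v\<^sup>2 * S)) / (b2 * S)
    \<le> (Lru - (Lr0 + e * b1 * u * S2)) / (b2 * S) - (Lrv - (Lr0 + e * b1 * v * S2)) / (b2 * S)
       + (u\<^sup>2 - v\<^sup>2) + 2 * b2 * k * (u - v) + C * Sm"
proof -
  have r: "2 * w * X * Y * S2 = 2 * w * (X * Y) * S2" for w by (simp add: mult.assoc)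
  show ?thesis unfolding r by (rule alg_a[OF assms])
qed

lemma alg_b':
  fixes b1 b2 X Y q t S S2 Sm k u v Lbu Lbv Lru Lrv Lr0 c0 C e :: real
  assumes "b2 > 0" "q > 0" "S > 0" "S2 = S\<^sup>2" "Sm = 1 / S" "k \<ge> 0"
    "t = k * Sm" "v \<le> u"
    "b1 = 2 * (X * Y) * q" "b1 = 2 * b2\<^sup>2 * q\<^sup>2" "e = 1 / (q + t)"
    "Lru - Lrv \<le> Lbu - Lbv"
    "C \<ge> 0"
  shows "(Lbu - (c0 + 2 * u * X * Y * S2 - b2 * u\<^sup>2 * S)) / (b2 * S) - (Lbv - (c0 + 2 * v * X * Y * S2 - b2 * v\<^sup>2 * S)) / (b2 * S)
    \<ge> (Lru - (Lr0 + e * b1 * u * S2)) / (b2 * S) - (Lrv - (Lr0 + e * b1 * v * S2)) / (b2 * S)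
       + (u\<^sup>2 - v\<^sup>2) - 2 * b2 * k * (u - v) - C * Sm"
proof -
  have r: "2 * w * X * Y * S2 = 2 * w * (X * Y) * S2" for w by (simp add: mult.assoc)
  show ?thesis unfolding r by (rule alg_b[OF assms])
qed

lemma coord_mono: "x \<le> y \<Longrightarrow> coord x \<le> coord y"
  unfolding coord_def by (intro nat_mono floor_mono)

theorem lemma3p4:
  fixes M :: "'s measure"
    and \<omega> :: "real \<Rightarrow> nat \<times> nat \<Rightarrow> 's \<Rightarrow> real"
  assumes "prob_space M"
    and indep: "\<forall>\<rho>\<in>{0<..<1}. prob_space.indep_vars M (\<lambda>_. borel) (\<omega> \<rho>) (UNIV - {(0,0)})"
    and origin: "\<forall>\<rho> x. \<omega> \<rho> (0,0) x = 0"
    and horiz: "\<forall>\<rho>\<in>{0<..<1}. \<forall>i\<ge>1. distributed M lborel (\<omega> \<rho> (i,0)) (exponential_density (1 - \<rho>))"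
    and vert: "\<forall>\<rho>\<in>{0<..<1}. \<forall>j\<ge>1. distributed M lborel (\<omega> \<rho> (0,j)) (exponential_density \<rho>)"
    and bulk: "\<forall>\<rho>\<in>{0<..<1}. \<forall>i\<ge>1. \<forall>j\<ge>1. distributed M lborel (\<omega> \<rho> (i,j)) (exponential_density 1)"
    and coupled: "\<forall>\<rho>\<in>{0<..<1}. \<forall>\<rho>'\<in>{0<..<1}. \<forall>i\<ge>1. \<forall>j\<ge>1. \<forall>x\<in>space M.
                    \<omega> \<rho> (i,j) x = \<omega> \<rho>' (i,j) x"
  shows "\<forall>(M1::real) (M2::real) (a::real) (b::real) (K::real). 0 < a \<and> a \<le> b \<and> 0 < K \<longrightarrow>
    (\<exists>(C::real) (N::nat). \<forall>n\<ge>N. \<forall>\<gamma>\<in>{a..b}. \<forall>\<kappa>\<in>{0<..K}.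
       (let \<rho>0 = 1 / (1 + \<gamma>);
            \<rho>p = \<rho>0 + \<kappa> * real n powr (-1/3);
            \<rho>m = \<rho>0 - \<kappa> * real n powr (-1/3)
        in
        (AE x in M.
           Zexit (\<lambda>p. \<omega> \<rho>p p x) (coord (\<gamma>\<^sup>2 * real n - beta1 \<gamma> * M1 * real n powr (2/3))) n \<ge> 0 \<longrightarrow>
           (\<forall>u v. -M1 \<le> v \<and> v \<le> u \<and> u \<le> M2 \<longrightarrow>
              Lresc_h (\<lambda>p. \<omega> \<rho>0 p x) \<gamma> n u - Lresc_h (\<lambda>p. \<omega> \<rho>0 p x) \<gamma> n v
              \<le> Bfun (\<lambda>p. \<omega> \<rho>p p x) \<rho>p \<gamma> n u - Bfun (\<lambda>p. \<omega> \<rho>p p x) \<rho>p \<gamma> n v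
                 + (u\<^sup>2 - v\<^sup>2) + 2 * beta2 \<gamma> * \<kappa> * (u - v) + C * real n powr (-1/3))) \<and>
        (AE x in M.
           Zexit (\<lambda>p. \<omega> \<rho>m p x) (coord (\<gamma>\<^sup>2 * real n + beta1 \<gamma> * M2 * real n powr (2/3))) n \<le> 0 \<longrightarrow>
           (\<forall>u v. -M1 \<le> v \<and> v \<le> u \<and> u \<le> M2 \<longrightarrow>
              Lresc_h (\<lambda>p. \<omega> \<rho>0 p x) \<gamma> n u - Lresc_h (\<lambda>p. \<omega> \<rho>0 p x) \<gamma> n v
              \<ge> Bfun (\<lambda>p. \<omega> \<rho>m p x) \<rho>m \<gamma> n u - Bfun (\<lambda>p. \<omega> \<rho>m p x) \<rho>m \<gamma> n v
                 + (u\<^sup>2 - v\<^sup>2) - 2 * beta2 \<gamma> * \<kappa> * (u - v) - C * real n powr (-1/3)))))"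
proof (intro allI impI)
  fix M1 M2 a b K :: real
  assume abK: "0 < a \<and> a \<le> b \<and> 0 < K"
  interpret prob_space M by fact
  have a0: "0 < a" and ab: "a \<le> b" and K0: "0 < K" using abK by auto
  define \<delta> where "\<delta> = min (a / (1 + a)) (1 / (1 + b)) / 2"
  have \<delta>0: "\<delta> > 0" using a0 ab unfolding \<delta>_def by auto
  define N :: nat where "N = nat \<lceil>(K / \<delta>) ^ 3\<rceil> + 1"
  define W where "W = \<bar>M1\<bar> + \<bar>M2\<bar>"
  define B2 where "B2 = (1 + b) powr (4/3) * a powr (-1/3)"
  define qmin where "qmin = a / (1 + a)"
  define C where "C = 4 * B2 * K\<^sup>2 * W / qmin"
  have qmin0: "qmin > 0" using a0 by (simp add: qmin_def)
  have B20: "B2 \<ge> 0" unfolding B2_def by simp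
  have C0: "C \<ge> 0" unfolding C_def W_def using B20 qmin0 by simp
  have distr: "\<forall>p. p \<noteq> (0,0) \<longrightarrow> (\<exists>l. distributed M lborel (\<omega> \<rho> p) (exponential_density l))"
    if \<rho>: "\<rho> \<in> {0<..<1}" for \<rho>
  proof (intro allI impI)
    fix p :: "nat \<times> nat" assume p: "p \<noteq> (0,0)"
    obtain i j where pij: "p = (i,j)" by (cases p)
    show "\<exists>l. distributed M lborel (\<omega> \<rho> p) (exponential_density l)"
    proof (cases "i = 0")
      case True
      then have "j \<ge> 1" using p pij by auto
      then show ?thesis using vert \<rho> pij True by (intro exI[of _ \<rho>]) auto
    next
      case False
      show ?thesis
      proof (cases "j = 0")
        case True
        have "i \<ge> 1" using False by simp
        then show ?thesis using horiz \<rho> pij True by (intro exI[of _ "1 - \<rho>"]) auto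
      next
        case False
        have "i \<ge> 1" "j \<ge> 1" using False \<open>i \<noteq> 0\<close> by auto
        then show ?thesis using bulk \<rho> pij by (intro exI[of _ 1]) auto
      qed
    qed
  qed
  have good: "AE x in M. x \<in> space M \<and> notie (\<lambda>p. \<omega> \<rho> p x) \<and> (\<forall>p. \<omega> \<rho> p x \<ge> 0)"
    if \<rho>: "\<rho> \<in> {0<..<1}" for \<rho>
  proof -
    have d2: "\<forall>p. p \<noteq> (0,0) \<longrightarrow> (\<exists>f. distributed M lborel (\<omega> \<rho> p) f)" using distr[OF \<rho>] by blast
    have "AE x in M. notie (\<lambda>q. \<omega> \<rho> q x)" by (rule AE_notie) (use indep \<rho> d2 in auto)
    moreover have "AE x in M. \<forall>p. \<omega> \<rho> p x \<ge> 0" by (rule AE_nonneg) (use origin distr[OF \<rho>] in auto)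
    ultimately show ?thesis by (auto simp: AE_space)
  qed
  show "\<exists>(C::real) (N::nat). \<forall>n\<ge>N. \<forall>\<gamma>\<in>{a..b}. \<forall>\<kappa>\<in>{0<..K}.
       (let \<rho>0 = 1 / (1 + \<gamma>);
            \<rho>p = \<rho>0 + \<kappa> * real n powr (-1/3);
            \<rho>m = \<rho>0 - \<kappa> * real n powr (-1/3)
        in
        (AE x in M.
           Zexit (\<lambda>p. \<omega> \<rho>p p x) (coord (\<gamma>\<^sup>2 * real n - beta1 \<gamma> * M1 * real n powr (2/3))) n \<ge> 0 \<longrightarrow>
           (\<forall>u v. -M1 \<le> v \<and> v \<le> u \<and> u \<le> M2 \<longrightarrow>
              Lresc_h (\<lambda>p. \<omega> \<rho>0 p x) \<gamma> n u - Lresc_h (\<lambda>p. \<omega> \<rho>0 p x) \<gamma> n v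
              \<le> Bfun (\<lambda>p. \<omega> \<rho>p p x) \<rho>p \<gamma> n u - Bfun (\<lambda>p. \<omega> \<rho>p p x) \<rho>p \<gamma> n v
                 + (u\<^sup>2 - v\<^sup>2) + 2 * beta2 \<gamma> * \<kappa> * (u - v) + C * real n powr (-1/3))) \<and>
        (AE x in M.
           Zexit (\<lambda>p. \<omega> \<rho>m p x) (coord (\<gamma>\<^sup>2 * real n + beta1 \<gamma> * M2 * real n powr (2/3))) n \<le> 0 \<longrightarrow>
           (\<forall>u v. -M1 \<le> v \<and> v \<le> u \<and> u \<le> M2 \<longrightarrow>
              Lresc_h (\<lambda>p. \<omega> \<rho>0 p x) \<gamma> n u - Lresc_h (\<lambda>p. \<omega> \<rho>0 p x) \<gamma> n v
              \<ge> Bfun (\<lambda>p. \<omega> \<rho>m p x) \<rho>m \<gamma> n u - Bfun (\<lambda>p. \<omega> \<rho>m p x) \<rho>m \<gamma> n v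
                 + (u\<^sup>2 - v\<^sup>2) - 2 * beta2 \<gamma> * \<kappa> * (u - v) - C * real n powr (-1/3))))"
  proof (intro exI allI impI ballI)
    fix n :: nat and \<gamma> \<kappa> :: real
    assume nN: "N \<le> n" and \<gamma>: "\<gamma> \<in> {a..b}" and \<kappa>: "\<kappa> \<in> {0<..K}"
    define \<rho>0 where "\<rho>0 = 1 / (1 + \<gamma>)"
    define \<rho>p where "\<rho>p = \<rho>0 + \<kappa> * real n powr (-1/3)"
    define \<rho>m where "\<rho>m = \<rho>0 - \<kappa> * real n powr (-1/3)"
    have nge: "real n \<ge> (K / \<delta>) ^ 3" using nN unfolding N_def by linarith
    have n1: "n \<ge> 1" using nN unfolding N_def by simp
    have npos: "real n > 0" using n1 by simp
    define s where "s = real n powr (1/3)"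
    have s0: "s > 0" using npos by (simp add: s_def)
    have S2: "real n powr (2/3) = s\<^sup>2" using powr_third[OF npos, of 2] by (simp add: s_def)
    have Sm: "real n powr (-1/3) = 1 / s"
      using powr_minus_divide[of "real n" "1/3"] by (simp add: s_def)
    have sK: "s \<ge> K / \<delta>"
    proof -
      have "((K / \<delta>) ^ 3) powr (1/3) \<le> real n powr (1/3)"
        by (rule powr_mono2) (use nge K0 \<delta>0 in auto)
      moreover have "((K / \<delta>) ^ 3) powr (1/3) = K / \<delta>"
      proof -
        have kd: "K / \<delta> > 0" using K0 \<delta>0 by simp
        have "(K / \<delta>) ^ 3 = (K / \<delta>) powr 3" using powr_numeral[OF less_imp_le[OF kd], of "num.Bit1 num.One"] by simp
        then have "((K / \<delta>) ^ 3) powr (1/3) = (K / \<delta>) powr (3 * (1/3))" by (simp add: powr_powr)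
        then show ?thesis using K0 \<delta>0 by simp
      qed
      ultimately show ?thesis by (simp add: s_def)
    qed
    have g0: "\<gamma> > 0" and ga: "a \<le> \<gamma>" and gb: "\<gamma> \<le> b" using \<gamma> a0 by auto
    have k0: "\<kappa> > 0" and kK: "\<kappa> \<le> K" using \<kappa> by auto
    define q where "q = \<gamma> / (1 + \<gamma>)"
    define t where "t = \<kappa> * real n powr (-1/3)"
    have q0: "q > 0" using g0 by (simp add: q_def)
    have teq: "t = \<kappa> / s" unfolding t_def Sm by simp
    have t0: "t > 0" using k0 s0 teq by simp
    have tK: "t \<le> \<delta>"
    proof -
      have "t = \<kappa> / s" by (rule teq)
      also have "\<dots> \<le> K / s" using kK s0 by (simp add: divide_right_mono)
      also have "\<dots> \<le> \<delta>" using sK s0 \<delta>0 K0 by (simp add: field_simps)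
      finally show ?thesis .
    qed
    have "a / (1 + a) \<le> q" unfolding q_def using a0 ga g0 by (simp add: field_simps)
    then have \<delta>q: "\<delta> \<le> q / 2" unfolding \<delta>_def using order.trans[OF min.cobounded1[of "a/(1+a)" "1/(1+b)"]] by (simp add: divide_right_mono)
    have "1 / (1 + b) \<le> \<rho>0" unfolding \<rho>0_def using gb g0 by (simp add: field_simps)
    then have \<delta>r: "\<delta> \<le> \<rho>0 / 2" unfolding \<delta>_def using order.trans[OF min.cobounded2[of "a/(1+a)" "1/(1+b)"]] by (simp add: divide_right_mono)
    have tq: "t \<le> q / 2" using tK \<delta>q by simp
    have rq: "1 - \<rho>0 = q" unfolding \<rho>0_def q_def using g0 by (simp add: field_simps)
    have r0pos: "\<rho>0 > 0" unfolding \<rho>0_def using g0 by simp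
    have 1: "1 - \<rho>p = q - t" unfolding \<rho>p_def t_def using rq by simp
    have 2: "1 - \<rho>m = q + t" unfolding \<rho>m_def t_def using rq by simp
    have r0: "\<rho>0 \<in> {0<..<1}" using r0pos rq q0 by auto
    have rp: "\<rho>p \<in> {0<..<1}" using 1 tq q0 t0 r0pos unfolding \<rho>p_def t_def[symmetric] by auto
    have rm: "\<rho>m \<in> {0<..<1}" using 2 tK \<delta>r q0 t0 r0pos unfolding \<rho>m_def t_def[symmetric] by auto
    have hA: "beta1 \<gamma> = 2 * ((1 + \<gamma>) powr (5/3) * \<gamma> powr (1/3)) * q" using beta_ids(1)[OF g0] by (simp add: q_def)
    have hB: "beta1 \<gamma> = 2 * (beta2 \<gamma>)\<^sup>2 * q\<^sup>2" using beta_ids(2)[OF g0] by (simp add: q_def)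
    have b2pos: "beta2 \<gamma> > 0" using beta_ids(4)[OF g0] .
    have b1pos: "beta1 \<gamma> > 0" using beta_ids(3)[OF g0] .
    have b2B: "beta2 \<gamma> \<le> B2"
    proof -
      have "(1 + \<gamma>) powr (4/3) \<le> (1 + b) powr (4/3)" by (rule powr_mono2) (use g0 gb in auto)
      moreover have "\<gamma> powr (-1/3) \<le> a powr (-1/3)" by (rule powr_mono2') (use a0 ga in auto)
      ultimately show ?thesis unfolding beta2_def B2_def by (intro mult_mono) auto
    qed
    have Cb: "4 * beta2 \<gamma> * \<kappa>\<^sup>2 * (u - v) / q \<le> C" if "-M1 \<le> v" "v \<le> u" "u \<le> M2" for u v
    proof -
      have uvW: "u - v \<le> W" "0 \<le> u - v" using that unfolding W_def by auto
      have kk: "\<kappa>\<^sup>2 \<le> K\<^sup>2" using k0 kK by (simp add: power_mono)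
      have "a / (1 + a) \<le> q" unfolding q_def using a0 ga g0 by (simp add: field_simps)
      then have "qmin \<le> q" unfolding qmin_def .
      then have iq: "1 / q \<le> 1 / qmin" by (intro divide_left_mono) (use qmin0 q0 in auto)
      have mm: "4 * beta2 \<gamma> * \<kappa>\<^sup>2 * (u - v) \<le> 4 * B2 * K\<^sup>2 * W"
        using b2B kk uvW b2pos by (intro mult_mono) auto
      have "(4 * beta2 \<gamma> * \<kappa>\<^sup>2 * (u - v)) * (1 / q) \<le> (4 * B2 * K\<^sup>2 * W) * (1 / qmin)"
        by (rule mult_mono[OF mm iq]) (use B20 uvW q0 in auto)
      then show ?thesis unfolding C_def by simp
    qed
    have sp: "real n powr (1/3) > 0" using s0 unfolding s_def .
    have s2: "real n powr (2/3) = (real n powr (1/3))\<^sup>2" using S2 unfolding s_def .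
    have sm: "real n powr (-1/3) = 1 / real n powr (1/3)" using Sm unfolding s_def .
    have kge: "\<kappa> \<ge> 0" using k0 by simp
    have e1: "1 / (1 - \<rho>p) = 1 / (q - t)" using 1 by simp
    have e2: "1 / (1 - \<rho>m) = 1 / (q + t)" using 2 by simp
    have bulkeq: "\<forall>p. \<not> ax p \<longrightarrow> \<omega> \<rho> p x = \<omega> \<rho>0 p x"
      if "\<rho> \<in> {0<..<1}" "x \<in> space M" for \<rho> x
    proof (intro allI impI)
      fix p :: "nat \<times> nat" assume "\<not> ax p"
      then obtain i j where "p = (i,j)" "i \<ge> 1" "j \<ge> 1" by (cases p) auto
      then show "\<omega> \<rho> p x = \<omega> \<rho>0 p x" using coupled that r0 by blast
    qed
    show "let \<rho>0 = 1 / (1 + \<gamma>);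
            \<rho>p = \<rho>0 + \<kappa> * real n powr (-1/3);
            \<rho>m = \<rho>0 - \<kappa> * real n powr (-1/3)
        in
        (AE x in M.
           Zexit (\<lambda>p. \<omega> \<rho>p p x) (coord (\<gamma>\<^sup>2 * real n - beta1 \<gamma> * M1 * real n powr (2/3))) n \<ge> 0 \<longrightarrow>
           (\<forall>u v. -M1 \<le> v \<and> v \<le> u \<and> u \<le> M2 \<longrightarrow>
              Lresc_h (\<lambda>p. \<omega> \<rho>0 p x) \<gamma> n u - Lresc_h (\<lambda>p. \<omega> \<rho>0 p x) \<gamma> n v
              \<le> Bfun (\<lambda>p. \<omega> \<rho>p p x) \<rho>p \<gamma> n u - Bfun (\<lambda>p. \<omega> \<rho>p p x) \<rho>p \<gamma> n v
                 + (u\<^sup>2 - v\<^sup>2) + 2 * beta2 \<gamma> * \<kappa> * (u - v) + C * real n powr (-1/3))) \<and>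
        (AE x in M.
           Zexit (\<lambda>p. \<omega> \<rho>m p x) (coord (\<gamma>\<^sup>2 * real n + beta1 \<gamma> * M2 * real n powr (2/3))) n \<le> 0 \<longrightarrow>
           (\<forall>u v. -M1 \<le> v \<and> v \<le> u \<and> u \<le> M2 \<longrightarrow>
              Lresc_h (\<lambda>p. \<omega> \<rho>0 p x) \<gamma> n u - Lresc_h (\<lambda>p. \<omega> \<rho>0 p x) \<gamma> n v
              \<ge> Bfun (\<lambda>p. \<omega> \<rho>m p x) \<rho>m \<gamma> n u - Bfun (\<lambda>p. \<omega> \<rho>m p x) \<rho>m \<gamma> n v
                 + (u\<^sup>2 - v\<^sup>2) - 2 * beta2 \<gamma> * \<kappa> * (u - v) - C * real n powr (-1/3)))"
      unfolding Let_def \<rho>0_def[symmetric] \<rho>p_def[symmetric] \<rho>m_def[symmetric]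
    proof (rule conjI)
      have keyA: "Zexit (\<lambda>p. \<omega> \<rho>p p x) (coord (\<gamma>\<^sup>2 * real n - beta1 \<gamma> * M1 * real n powr (2/3))) n \<ge> 0 \<longrightarrow>
           (\<forall>u v. -M1 \<le> v \<and> v \<le> u \<and> u \<le> M2 \<longrightarrow>
              Lresc_h (\<lambda>p. \<omega> \<rho>0 p x) \<gamma> n u - Lresc_h (\<lambda>p. \<omega> \<rho>0 p x) \<gamma> n v
              \<le> Bfun (\<lambda>p. \<omega> \<rho>p p x) \<rho>p \<gamma> n u - Bfun (\<lambda>p. \<omega> \<rho>p p x) \<rho>p \<gamma> n v
                 + (u\<^sup>2 - v\<^sup>2) + 2 * beta2 \<gamma> * \<kappa> * (u - v) + C * real n powr (-1/3))"
        if G: "x \<in> space M \<and> notie (\<lambda>p. \<omega> \<rho>p p x) \<and> (\<forall>p. \<omega> \<rho>p p x \<ge> 0)" for x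
      proof (intro impI allI)
        assume Z: "Zexit (\<lambda>p. \<omega> \<rho>p p x) (coord (\<gamma>\<^sup>2 * real n - beta1 \<gamma> * M1 * real n powr (2/3))) n \<ge> 0"
        fix u v assume uv: "-M1 \<le> v \<and> v \<le> u \<and> u \<le> M2"
        have vu: "v \<le> u" using uv by simp
        have S2n: "real n powr (2/3) \<ge> 0" by simp
        have m0v: "coord (\<gamma>\<^sup>2 * real n - beta1 \<gamma> * M1 * real n powr (2/3)) \<le> coord (\<gamma>\<^sup>2 * real n + beta1 \<gamma> * v * real n powr (2/3))"
        proof (rule coord_mono)
          have "beta1 \<gamma> * (-M1) * real n powr (2/3) \<le> beta1 \<gamma> * v * real n powr (2/3)"
            using uv b1pos S2n by (intro mult_right_mono mult_left_mono) auto
          then show "\<gamma>\<^sup>2 * real n - beta1 \<gamma> * M1 * real n powr (2/3) \<le> \<gamma>\<^sup>2 * real n + beta1 \<gamma> * v * real n powr (2/3)"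
            by simp
        qed
        have mvu: "coord (\<gamma>\<^sup>2 * real n + beta1 \<gamma> * v * real n powr (2/3)) \<le> coord (\<gamma>\<^sup>2 * real n + beta1 \<gamma> * u * real n powr (2/3))"
          using uv b1pos S2n by (intro coord_mono) (simp add: mult_left_mono mult_right_mono)
        have dL: "Lbulk (\<lambda>p. \<omega> \<rho>0 p x) (coord (\<gamma>\<^sup>2 * real n + beta1 \<gamma> * u * real n powr (2/3))) n
                - Lbulk (\<lambda>p. \<omega> \<rho>0 p x) (coord (\<gamma>\<^sup>2 * real n + beta1 \<gamma> * v * real n powr (2/3))) n
              \<le> Lrho (\<lambda>p. \<omega> \<rho>p p x) (coord (\<gamma>\<^sup>2 * real n + beta1 \<gamma> * u * real n powr (2/3))) n
                - Lrho (\<lambda>p. \<omega> \<rho>p p x) (coord (\<gamma>\<^sup>2 * real n + beta1 \<gamma> * v * real n powr (2/3))) n"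
          by (rule detA[OF bulkeq[OF rp] _ _ n1 m0v mvu Z]) (use G in auto)
        show "Lresc_h (\<lambda>p. \<omega> \<rho>0 p x) \<gamma> n u - Lresc_h (\<lambda>p. \<omega> \<rho>0 p x) \<gamma> n v
              \<le> Bfun (\<lambda>p. \<omega> \<rho>p p x) \<rho>p \<gamma> n u - Bfun (\<lambda>p. \<omega> \<rho>p p x) \<rho>p \<gamma> n v
                 + (u\<^sup>2 - v\<^sup>2) + 2 * beta2 \<gamma> * \<kappa> * (u - v) + C * real n powr (-1/3)"
          unfolding Lresc_h_def Bfun_def
          by (rule alg_a'[OF b2pos q0 sp s2 sm kge t_def tq vu hA hB e1 dL Cb]) (use uv in auto)
      qed
      show "AE x in M. Zexit (\<lambda>p. \<omega> \<rho>p p x) (coord (\<gamma>\<^sup>2 * real n - beta1 \<gamma> * M1 * real n powr (2/3))) n \<ge> 0 \<longrightarrow>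
           (\<forall>u v. -M1 \<le> v \<and> v \<le> u \<and> u \<le> M2 \<longrightarrow>
              Lresc_h (\<lambda>p. \<omega> \<rho>0 p x) \<gamma> n u - Lresc_h (\<lambda>p. \<omega> \<rho>0 p x) \<gamma> n v
              \<le> Bfun (\<lambda>p. \<omega> \<rho>p p x) \<rho>p \<gamma> n u - Bfun (\<lambda>p. \<omega> \<rho>p p x) \<rho>p \<gamma> n v
                 + (u\<^sup>2 - v\<^sup>2) + 2 * beta2 \<gamma> * \<kappa> * (u - v) + C * real n powr (-1/3))"
        by (rule eventually_mono[OF good[OF rp] keyA])
    next
      have keyB: "Zexit (\<lambda>p. \<omega> \<rho>m p x) (coord (\<gamma>\<^sup>2 * real n + beta1 \<gamma> * M2 * real n powr (2/3))) n \<le> 0 \<longrightarrow>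
           (\<forall>u v. -M1 \<le> v \<and> v \<le> u \<and> u \<le> M2 \<longrightarrow>
              Lresc_h (\<lambda>p. \<omega> \<rho>0 p x) \<gamma> n u - Lresc_h (\<lambda>p. \<omega> \<rho>0 p x) \<gamma> n v
              \<ge> Bfun (\<lambda>p. \<omega> \<rho>m p x) \<rho>m \<gamma> n u - Bfun (\<lambda>p. \<omega> \<rho>m p x) \<rho>m \<gamma> n v
                 + (u\<^sup>2 - v\<^sup>2) - 2 * beta2 \<gamma> * \<kappa> * (u - v) - C * real n powr (-1/3))"
        if G: "x \<in> space M \<and> notie (\<lambda>p. \<omega> \<rho>m p x) \<and> (\<forall>p. \<omega> \<rho>m p x \<ge> 0)" for x
      proof (intro impI allI)
        assume Z: "Zexit (\<lambda>p. \<omega> \<rho>m p x) (coord (\<gamma>\<^sup>2 * real n + beta1 \<gamma> * M2 * real n powr (2/3))) n \<le> 0"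
        fix u v assume uv: "-M1 \<le> v \<and> v \<le> u \<and> u \<le> M2"
        have vu: "v \<le> u" using uv by simp
        have S2n: "real n powr (2/3) \<ge> 0" by simp
        have mu2: "coord (\<gamma>\<^sup>2 * real n + beta1 \<gamma> * u * real n powr (2/3)) \<le> coord (\<gamma>\<^sup>2 * real n + beta1 \<gamma> * M2 * real n powr (2/3))"
          using uv b1pos S2n by (intro coord_mono) (simp add: mult_left_mono mult_right_mono)
        have mvu: "coord (\<gamma>\<^sup>2 * real n + beta1 \<gamma> * v * real n powr (2/3)) \<le> coord (\<gamma>\<^sup>2 * real n + beta1 \<gamma> * u * real n powr (2/3))"
          using uv b1pos S2n by (intro coord_mono) (simp add: mult_left_mono mult_right_mono)
        have dL: "Lrho (\<lambda>p. \<omega> \<rho>m p x) (coord (\<gamma>\<^sup>2 * real n + beta1 \<gamma> * u * real n powr (2/3))) n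
                - Lrho (\<lambda>p. \<omega> \<rho>m p x) (coord (\<gamma>\<^sup>2 * real n + beta1 \<gamma> * v * real n powr (2/3))) n
              \<le> Lbulk (\<lambda>p. \<omega> \<rho>0 p x) (coord (\<gamma>\<^sup>2 * real n + beta1 \<gamma> * u * real n powr (2/3))) n
                - Lbulk (\<lambda>p. \<omega> \<rho>0 p x) (coord (\<gamma>\<^sup>2 * real n + beta1 \<gamma> * v * real n powr (2/3))) n"
          by (rule detB[OF bulkeq[OF rm] _ _ n1 mvu mu2 Z]) (use G in auto)
        show "Lresc_h (\<lambda>p. \<omega> \<rho>0 p x) \<gamma> n u - Lresc_h (\<lambda>p. \<omega> \<rho>0 p x) \<gamma> n v
              \<ge> Bfun (\<lambda>p. \<omega> \<rho>m p x) \<rho>m \<gamma> n u - Bfun (\<lambda>p. \<omega> \<rho>m p x) \<rho>m \<gamma> n v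
                 + (u\<^sup>2 - v\<^sup>2) - 2 * beta2 \<gamma> * \<kappa> * (u - v) - C * real n powr (-1/3)"
          unfolding Lresc_h_def Bfun_def
          by (rule alg_b'[OF b2pos q0 sp s2 sm kge t_def vu hA hB e2 dL C0])
      qed
      show "AE x in M. Zexit (\<lambda>p. \<omega> \<rho>m p x) (coord (\<gamma>\<^sup>2 * real n + beta1 \<gamma> * M2 * real n powr (2/3))) n \<le> 0 \<longrightarrow>
           (\<forall>u v. -M1 \<le> v \<and> v \<le> u \<and> u \<le> M2 \<longrightarrow>
              Lresc_h (\<lambda>p. \<omega> \<rho>0 p x) \<gamma> n u - Lresc_h (\<lambda>p. \<omega> \<rho>0 p x) \<gamma> n v
              \<ge> Bfun (\<lambda>p. \<omega> \<rho>m p x) \<rho>m \<gamma> n u - Bfun (\<lambda>p. \<omega> \<rho>m p x) \<rho>m \<gamma> n v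
                 + (u\<^sup>2 - v\<^sup>2) - 2 * beta2 \<gamma> * \<kappa> * (u - v) - C * real n powr (-1/3))"
        by (rule eventually_mono[OF good[OF rm] keyB])
    qed
  qed
qed


end
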